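(* Let $(X,d,\mu)$, $p$, $\underline{Q}_\mu$ be as in the context. Fix $\underline{\theta}\in[0,\min\{p,\underline{Q}_\mu\})$, an integer $N\ge2$, numbers $0<\theta_1<\dots<\theta_N=\underline{\theta}$ and closed sets $S^i\in\mathcal{ADR}_{\theta_i}(X)$, $i=1,\dots,N$. Then there is a constant $C>0$ such that $$\mathcal{GL}^{(3)}_p(f)\le C\Big(\mathcal{GL}^{(1)}_p(f)+\sum_{i=1}^N\|f|L_p(\mathcal H_{\theta_i}\lfloor_{S^i})\|\Big)\quad\text{for all }f\in\bigcap_{i=1}^NL_p(\mathcal H_{\theta_i}\lfloor_{S^i}).$$
   Context: Standing setting: $(X,d)$ complete separable metric space, $\mu$ a Borel regular locally finite outer measure, $\operatorname{supp}\mu=X$, uniformly locally doubling (for every $R>0$, $\sup_{r\in(0,R]}\sup_x\mu(B_{2r}(x))/\mu(B_r(x))<\infty$). Balls are closed, $B_r(x)=\{y:d(x,y)\le r\}$, $B_k(x)=B_{2^{-k}}(x)$. A fixed $p\in(1,\infty)$; $X$ supports a weak local $(1,p)$-Poincaré inequality (for every $R>0$ there are $C,\lambda\ge1$ with $\inf_c\frac{1}{\mu(B_r(x))}\int_{B_r(x)}|f-c|d\mu\le Cr(\frac{1}{\mu(B_{\lambda r}(x))}\int_{B_{\lambda r}(x)}(\operatorname{lip}f)^pd\mu)^{1/p}$ for Lipschitz $f$, $x\in X$, $r\in(0,R]$). $\underline{Q}_\mu$ is the infimum of $Q>0$ such that for every $R>0$ there is $C$ with $(r_{B'}/r_B)^Q\le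 C\mu(B')/\mu(B)$ for balls $B'\subset B$, $0<r_{B'}\le r_B\le R$. Notation: $\mathrm{Av}_{G,\mathfrak m}(g)=\mathfrak m(G)^{-1}\int_Gg\,d\mathfrak m$ if $\mathfrak m(G)>0$, else $0$; $\mathfrak m\lfloor_S(E)=\mathfrak m(E\cap S)$. $\mathcal H_{\vartheta,\delta}(E):=\inf\{\sum\mu(B_{r_i}(x_i))r_i^{-\vartheta}:E\subset\bigcup B_{r_i}(x_i),0<r_i<\delta\}$, $\mathcal H_\vartheta=\lim_{\delta\to0}\mathcal H_{\vartheta,\delta}$. $\mathcal{ADR}_\vartheta(X)$: closed $S'$ with $\varkappa_1\mu(B_r(x))r^{-\vartheta}\le\mathcal H_\vartheta(B_r(x)\cap S')\le\varkappa_2\mu(B_r(x))r^{-\vartheta}$ for $x\in S'$, $r\in(0,1]$. Gluing functionals: $\Sigma^{i,j}_k:=\{(y,z)\in S^i\times S^j:d(y,z)\le2^{-k}\}$, $\operatorname{w}_k(y,z):=(\mu(B_k(y))\mu(B_k(z)))^{-1/2}$, $A^{i,j}_k(f)(y,z):=\mathrm{Av}_{B_k(y)\cap S^i,\mathcal H_{\theta_i}}\mathrm{Av}_{B_k(z)\cap S^j,\mathcal H_{\theta_j}}|f(y')-f(z')|$. $\mathcal{GL}^{(1)}_p(f):=\big(\sum_{i\ne j}\sum_{k\ge1}2^{k(p-\theta_i-\theta_j)}\iint_{\Sigma^{i,j}_k}\operatorname{w}_k(y,z)|f(y)-f(z)|^pd\mathcal H_{\theta_i}(y)d\mathcal H_{\theta_j}(z)\big)^{1/p}$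 and $\mathcal{GL}^{(3)}_p(f)$ is the same with $|f(y)-f(z)|$ replaced by $A^{i,j}_k(f)(y,z)$. *)

theory Defs
  imports "HOL-Analysis.Analysis"
begin

definition epowr :: "ennreal \<Rightarrow> real \<Rightarrow> ennreal" where
  "epowr x a = (if x = \<infinity> then \<infinity> else ennreal (enn2real x powr a))"

definition Av :: "'a measure \<Rightarrow> 'a set \<Rightarrow> ('a \<Rightarrow> ennreal) \<Rightarrow> ennreal" where
  "Av m G g = (if emeasure m G > 0 then (\<integral>\<^sup>+x\<in>G. g x \<partial>m) / emeasure m G else 0)"

definition lip :: "('a::metric_space \<Rightarrow> real) \<Rightarrow> 'a \<Rightarrow> real" where
  "lip f x = real_of_ereal
     (Liminf (at_right (0::real)) (\<lambda>r. SUP y\<in>cball x r. ereal (\<bar>f y - f x\<bar> / r)))"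

definition locally_finite_msr :: "'a::metric_space measure \<Rightarrow> bool" where
  "locally_finite_msr M \<longleftrightarrow> (\<forall>x. \<exists>e>0. emeasure M (ball x e) < \<infinity>)"

definition full_support :: "'a::metric_space measure \<Rightarrow> bool" where
  "full_support M \<longleftrightarrow> (\<forall>x r. r > 0 \<longrightarrow> emeasure M (ball x r) > 0)"

definition unif_loc_doubling :: "'a::metric_space measure \<Rightarrow> bool" where
  "unif_loc_doubling M \<longleftrightarrow>
     (\<forall>R>0. \<exists>C::real. \<forall>r x. 0 < r \<and> r \<le> R \<longrightarrow>
        emeasure M (cball x (2*r)) \<le> ennreal C * emeasure M (cball x r))"

definition weak_local_poincare :: "real \<Rightarrow> 'a::metric_space measure \<Rightarrow> bool" where
  "weak_local_poincare p M \<longleftrightarrow>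
     (\<forall>R>0. \<exists>C lam::real. C \<ge> 1 \<and> lam \<ge> 1 \<and>
        (\<forall>f::'a \<Rightarrow> real. \<forall>L x r. lipschitz_on L UNIV f \<and> 0 < r \<and> r \<le> R \<longrightarrow>
           (INF c::real. Av M (cball x r) (\<lambda>y. ennreal \<bar>f y - c\<bar>))
             \<le> ennreal (C * r) *
               epowr (Av M (cball x (lam * r)) (\<lambda>y. ennreal (lip f y powr p))) (1 / p)))"

definition Qlow :: "'a::metric_space measure \<Rightarrow> real" where
  "Qlow M = Inf {Q. Q > 0 \<and>
     (\<forall>R>0. \<exists>C::real. \<forall>x x' r r'. cball x' r' \<subseteq> cball x r \<and> 0 < r' \<and> r' \<le> r \<and> r \<le> R \<longrightarrow>
        (r' / r) powr Q \<le> C * measure M (cball x' r') / measure M (cball x r))}"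

definition Hd :: "'a::metric_space measure \<Rightarrow> real \<Rightarrow> real \<Rightarrow> 'a set \<Rightarrow> ennreal" where
  "Hd M th \<delta> E = (INF cv \<in> {(c, r, I). (\<forall>i\<in>I. 0 < r i \<and> r i < \<delta>) \<and>
                                   E \<subseteq> (\<Union>i\<in>I. cball (c i) (r i))}.
      (case cv of (c, r, I) \<Rightarrow>
        (\<Sum>i::nat. if i \<in> I then emeasure M (cball (c i) (r i)) * ennreal (r i powr (- th)) else 0)))"

definition Hth :: "'a::metric_space measure \<Rightarrow> real \<Rightarrow> 'a set \<Rightarrow> ennreal" where
  "Hth M th E = (SUP \<delta>\<in>{0<..}. Hd M th \<delta> E)"

definition Hmeas :: "'a::metric_space measure \<Rightarrow> real \<Rightarrow> 'a measure" where
  "Hmeas M th = measure_of UNIV (sets borel) (Hth M th)"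

definition Hrestr :: "'a::metric_space measure \<Rightarrow> real \<Rightarrow> 'a set \<Rightarrow> 'a measure" where
  "Hrestr M th S = density (Hmeas M th) (indicator S)"

definition ADR :: "'a::metric_space measure \<Rightarrow> real \<Rightarrow> 'a set \<Rightarrow> bool" where
  "ADR M th S \<longleftrightarrow> closed S \<and>
     (\<exists>k1 k2::real. 0 < k1 \<and> 0 < k2 \<and>
       (\<forall>x\<in>S. \<forall>r. 0 < r \<and> r \<le> 1 \<longrightarrow>
          ennreal k1 * emeasure M (cball x r) * ennreal (r powr (- th)) \<le> Hth M th (cball x r \<inter> S) \<and>
          Hth M th (cball x r \<inter> S) \<le> ennreal k2 * emeasure M (cball x r) * ennreal (r powr (- th))))"

definition inLp :: "real \<Rightarrow> 'a measure \<Rightarrow> ('a \<Rightarrow> real) \<Rightarrow> bool" where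
  "inLp p m f \<longleftrightarrow> f \<in> borel_measurable m \<and> (\<integral>\<^sup>+x. ennreal (\<bar>f x\<bar> powr p) \<partial>m) < \<infinity>"

definition Lpnorm :: "real \<Rightarrow> 'a measure \<Rightarrow> ('a \<Rightarrow> real) \<Rightarrow> ennreal" where
  "Lpnorm p m f = epowr (\<integral>\<^sup>+x. ennreal (\<bar>f x\<bar> powr p) \<partial>m) (1 / p)"

definition wk :: "'a::metric_space measure \<Rightarrow> nat \<Rightarrow> 'a \<Rightarrow> 'a \<Rightarrow> ennreal" where
  "wk M k y z = ennreal ((measure M (cball y (2 powr - real k)) * measure M (cball z (2 powr - real k)))
                         powr (- 1 / 2))"

definition Aijk :: "'a::metric_space measure \<Rightarrow> (nat \<Rightarrow> real) \<Rightarrow> (nat \<Rightarrow> 'a set) \<Rightarrow> nat \<Rightarrow> nat \<Rightarrow> nat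
                   \<Rightarrow> ('a \<Rightarrow> real) \<Rightarrow> 'a \<Rightarrow> 'a \<Rightarrow> ennreal" where
  "Aijk M \<theta> S i j k f y z =
     Av (Hmeas M (\<theta> i)) (cball y (2 powr - real k) \<inter> S i)
       (\<lambda>y'. Av (Hmeas M (\<theta> j)) (cball z (2 powr - real k) \<inter> S j) (\<lambda>z'. ennreal \<bar>f y' - f z'\<bar>))"

definition GLsum :: "real \<Rightarrow> 'a::metric_space measure \<Rightarrow> nat \<Rightarrow> (nat \<Rightarrow> real) \<Rightarrow> (nat \<Rightarrow> 'a set)
                    \<Rightarrow> (nat \<Rightarrow> nat \<Rightarrow> nat \<Rightarrow> 'a \<Rightarrow> 'a \<Rightarrow> ennreal) \<Rightarrow> ennreal" where
  "GLsum p M N \<theta> S g =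
     epowr (\<Sum>i\<in>{1..N}. \<Sum>j\<in>{1..N}. if i = j then 0 else
        (\<Sum>k'. let k = Suc k' in
           ennreal (2 powr (real k * (p - \<theta> i - \<theta> j))) *
           (\<integral>\<^sup>+y. (\<integral>\<^sup>+z. (if dist y z \<le> 2 powr - real k then wk M k y z * g i j k y z else 0)
                 \<partial>Hrestr M (\<theta> j) (S j)) \<partial>Hrestr M (\<theta> i) (S i)))) (1 / p)"

definition GL1 :: "real \<Rightarrow> 'a::metric_space measure \<Rightarrow> nat \<Rightarrow> (nat \<Rightarrow> real) \<Rightarrow> (nat \<Rightarrow> 'a set)
                   \<Rightarrow> ('a \<Rightarrow> real) \<Rightarrow> ennreal" where
  "GL1 p M N \<theta> S f = GLsum p M N \<theta> S (\<lambda>i j k y z. ennreal (\<bar>f y - f z\<bar> powr p))"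

definition GL3 :: "real \<Rightarrow> 'a::metric_space measure \<Rightarrow> nat \<Rightarrow> (nat \<Rightarrow> real) \<Rightarrow> (nat \<Rightarrow> 'a set)
                   \<Rightarrow> ('a \<Rightarrow> real) \<Rightarrow> ennreal" where
  "GL3 p M N \<theta> S f = GLsum p M N \<theta> S (\<lambda>i j k y z. epowr (Aijk M \<theta> S i j k f y z) p)"

end

theory Submission
  imports Defs "HOL-Analysis.Analysis"
begin


lemma sigma_sets_borel: "sigma_sets UNIV (sets borel) = sets borel"
  using sets.sigma_sets_eq[of borel] by simp

lemma sets_Hmeas: "sets (Hmeas M th) = sets borel"
  unfolding Hmeas_def by (simp add: sets_measure_of_conv sigma_sets_borel)

lemma emeasure_Hmeas_conv: "E \<in> sets borel \<Longrightarrow> emeasure (Hmeas M th) E =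
   (if measure_space UNIV (sets borel) (Hth M th) then Hth M th E else 0)"
  unfolding Hmeas_def by (simp add: emeasure_measure_of_conv sigma_sets_borel)

lemma sets_Hrestr: "sets (Hrestr M th S) = sets borel"
  unfolding Hrestr_def by (simp add: sets_Hmeas)

locale mms =
  fixes M :: "'a::polish_space measure" and Cd :: real
  assumes sets_M[measurable_cong]: "sets M = sets borel"
    and fin: "emeasure M (cball x r) < \<infinity>"
    and pos: "0 < r \<Longrightarrow> 0 < emeasure M (cball x r)"
    and dbl: "0 < r \<Longrightarrow> r \<le> 8 \<Longrightarrow> emeasure M (cball x (2*r)) \<le> ennreal Cd * emeasure M (cball x r)"
    and Cd: "1 \<le> Cd"
begin

definition m :: "'a \<Rightarrow> real \<Rightarrow> real" where "m x r = measure M (cball x r)"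

lemma space_M[simp]: "space M = UNIV"
  using sets_eq_imp_space_eq[OF sets_M] by simp

lemma cball_sets[measurable]: "cball x r \<in> sets M"
  using sets_M by simp

lemma emeasure_m: "emeasure M (cball x r) = ennreal (m x r)"
  unfolding m_def using fin[of x r] by (simp add: emeasure_eq_ennreal_measure less_top)

lemma m_nonneg: "0 \<le> m x r" unfolding m_def by simp

lemma m_pos: "0 < r \<Longrightarrow> 0 < m x r"
  using pos[of r x] unfolding emeasure_m by simp

lemma m_mono: "cball x r \<subseteq> cball y s \<Longrightarrow> m x r \<le> m y s"
proof -
  assume "cball x r \<subseteq> cball y s"
  then have "emeasure M (cball x r) \<le> emeasure M (cball y s)" by (rule emeasure_mono) simp
  then show ?thesis unfolding emeasure_m using m_nonneg by simp
qed

lemma m_dbl: "0 < r \<Longrightarrow> r \<le> 8 \<Longrightarrow> m x (2*r) \<le> Cd * m x r"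
  using dbl[of r x] Cd m_nonneg unfolding emeasure_m by (simp add: ennreal_mult[symmetric])

lemma sigma_finite_M: "sigma_finite_measure M"
proof
  let ?A = "range (\<lambda>n::nat. cball (undefined::'a) (real n))"
  have "\<Union>?A = UNIV"
  proof safe
    fix x :: 'a
    obtain n :: nat where "dist undefined x \<le> real n" using real_arch_simple by blast
    then show "x \<in> \<Union>?A" by auto
  qed auto
  then show "\<exists>A. countable A \<and> A \<subseteq> sets M \<and> \<Union> A = space M \<and> (\<forall>a\<in>A. emeasure M a \<noteq> \<infinity>)"
    using fin by (intro exI[of _ ?A]) (auto simp: less_top)
qed

lemma closed_distle: "closed {p::'a\<times>'a. dist (fst p) (snd p) \<le> r}"
  by (intro closed_Collect_le continuous_intros)

lemma m_meas[measurable]: "(\<lambda>x. m x r) \<in> borel_measurable borel"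
proof -
  interpret sigma_finite_measure M by (rule sigma_finite_M)
  let ?Q = "{p::'a\<times>'a. dist (fst p) (snd p) \<le> r}"
  have "?Q \<in> sets (borel \<Otimes>\<^sub>M M)"
    using closed_distle[of r] unfolding sets_pair_measure_cong[OF refl sets_M] borel_prod by (simp add: borel_closed)
  from measurable_emeasure_Pair[OF this]
  have "(\<lambda>x. emeasure M (cball x r)) \<in> borel_measurable borel"
    by (simp add: vimage_def cball_def)
  then have "(\<lambda>x. enn2real (emeasure M (cball x r))) \<in> borel_measurable borel" by measurable
  then show ?thesis unfolding emeasure_m by (simp add: m_nonneg)
qed

end

lemma young1: fixes p t :: real assumes p: "1 < p" and t: "0 \<le> t"
  shows "t \<le> t powr p / p + (1 - 1/p)"
proof -
  define q where "q = p / (p - 1)"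
  have q: "q > 1" "1/p + 1/q = 1" using p unfolding q_def by (auto simp: field_simps)
  have "t * 1 \<le> t powr p / p + 1 powr q / q"
    by (rule Youngs_inequality) (use p q t in auto)
  moreover have "1 / q = 1 - 1/p" using q by simp
  ultimately show ?thesis by simp
qed

lemma epowr_0[simp]: "0 < a \<Longrightarrow> epowr 0 a = 0"
  unfolding epowr_def by simp

lemma epowr_top[simp]: "epowr \<infinity> a = \<infinity>"
  unfolding epowr_def by simp

lemma epowr_ennreal: "0 \<le> x \<Longrightarrow> epowr (ennreal x) a = ennreal (x powr a)"
  unfolding epowr_def by simp

lemma epowr_eq_0_iff: "0 < a \<Longrightarrow> epowr x a = 0 \<longleftrightarrow> x = 0"
  unfolding epowr_def by (cases x) auto

lemma epowr_mono: "x \<le> y \<Longrightarrow> 0 \<le> a \<Longrightarrow> epowr x a \<le> epowr y a"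
  unfolding epowr_def
  by (cases x; cases y) (auto intro!: ennreal_leI powr_mono2 simp: top_unique)

lemma measurable_epowr[measurable (raw)]: assumes [measurable]: "g \<in> borel_measurable m"
  shows "(\<lambda>x. epowr (g x) a) \<in> borel_measurable m"
  unfolding epowr_def by measurable



lemma epowr_top'[simp]: "epowr top a = top"
  unfolding epowr_def by simp

lemma jensen_av:
  fixes m :: "'b measure" and g :: "'b \<Rightarrow> ennreal"
  assumes p: "1 < p" and G[measurable]: "G \<in> sets m" and fin: "emeasure m G < \<infinity>"
    and g[measurable]: "g \<in> borel_measurable m"
  shows "epowr (Av m G g) p \<le> Av m G (\<lambda>x. epowr (g x) p)"
proof (cases "emeasure m G = 0")
  case True then show ?thesis using p by (simp add: Av_def)
next
  case False
  obtain c where c: "emeasure m G = ennreal c" "0 < c"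
    using fin False by (cases "emeasure m G") (auto simp: less_le)
  define I where "I = (\<integral>\<^sup>+x\<in>G. epowr (g x) p \<partial>m)"
  show ?thesis
  proof (cases "I = \<infinity>")
    case True then show ?thesis using c by (simp add: Av_def I_def[symmetric] ennreal_top_divide)
  next
    case False
    then obtain a where a: "I = ennreal a" "0 \<le> a" by (cases I) auto
    have RHS: "Av m G (\<lambda>x. epowr (g x) p) = ennreal (a / c)"
      using c a by (simp add: Av_def I_def[symmetric] divide_ennreal)
    show ?thesis
    proof (cases "a = 0")
      case True
      then have "AE x in m. epowr (g x) p * indicator G x = 0"
        using a by (subst nn_integral_0_iff_AE[symmetric]) (auto simp: I_def)
      then have "AE x in m. g x * indicator G x = 0"
        by eventually_elim (use p in \<open>auto simp: epowr_eq_0_iff indicator_def split: if_splits\<close>)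
      then have "(\<integral>\<^sup>+x\<in>G. g x \<partial>m) = 0"
        by (subst nn_integral_0_iff_AE) auto
      then show ?thesis using p by (simp add: Av_def)
    next
      case False
      with a have apos: "0 < a" by simp
      define lam where "lam = (a/c) powr (1/p)"
      have lam: "0 < lam" using apos c unfolding lam_def by simp
      have lamp: "lam powr p = a / c"
        using p apos c unfolding lam_def by (simp add: powr_powr)
      have pw: "g x * indicator G x \<le> ennreal lam * (epowr (g x) p * indicator G x * ennreal (c/(p*a))
                  + ennreal (1 - 1/p) * indicator G x)" for x
      proof (cases "x \<in> G")
        case False then show ?thesis by simp
      next
        case True
        show ?thesis
        proof (cases "g x")
          case (real t)
          have t: "t / lam \<le> (t/lam) powr p / p + (1 - 1/p)"
            by (rule young1) (use p real lam in auto)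
          have "(t/lam) powr p = t powr p / (a/c)"
            using real lam by (simp add: powr_divide lamp)
          with t have "t / lam \<le> t powr p * (c/(p*a)) + (1 - 1/p)"
            using apos c p by (simp add: field_simps)
          then have "t \<le> lam * (t powr p * (c/(p*a)) + (1 - 1/p))"
            using lam by (simp add: field_simps)
          have h1: "0 \<le> t powr p" "0 \<le> c/(p*a)" "0 \<le> 1 - 1/p" "0 \<le> t powr p * (c/(p*a))"
            "0 \<le> t powr p * (c/(p*a)) + (1 - 1/p)" "0 \<le> lam" "0 \<le> t"
            using apos c p lam real by auto
          have e: "ennreal lam * (ennreal (t powr p) * ennreal (c/(p*a)) + ennreal (1 - 1/p))
              = ennreal (lam * (t powr p * (c/(p*a)) + (1 - 1/p)))"
            by (simp only: ennreal_mult[symmetric] ennreal_plus[symmetric] h1)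
          show ?thesis using True real h1 \<open>t \<le> _\<close>
            by (simp add: epowr_ennreal e del: ennreal_plus)
        next
          case top
          then show ?thesis using True lam apos c p
            by (simp add: ennreal_mult_top ennreal_top_mult)
        qed
      qed
      have "(\<integral>\<^sup>+x\<in>G. g x \<partial>m) \<le> (\<integral>\<^sup>+x. ennreal lam * (epowr (g x) p * indicator G x * ennreal (c/(p*a))
                  + ennreal (1 - 1/p) * indicator G x) \<partial>m)"
        by (intro nn_integral_mono pw)
      also have "\<dots> = ennreal lam * (I * ennreal (c/(p*a)) + ennreal (1 - 1/p) * emeasure m G)"
        by (simp add: nn_integral_cmult nn_integral_add nn_integral_multc I_def)
      also have "\<dots> = ennreal (lam * c)"
        using a c apos p lam by (simp add: ennreal_mult[symmetric] ennreal_plus[symmetric] field_simps del: ennreal_plus)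
      finally have "(\<integral>\<^sup>+x\<in>G. g x \<partial>m) \<le> ennreal (lam * c)" .
      then have "Av m G g \<le> ennreal lam"
        using c lam by (auto simp: Av_def ennreal_mult[symmetric] mult.commute intro!: divide_le_posI_ennreal)
      then have "epowr (Av m G g) p \<le> epowr (ennreal lam) p"
        using p by (intro epowr_mono) auto
      also have "\<dots> = ennreal (a / c)" using lam by (simp add: epowr_ennreal lamp)
      finally show ?thesis using RHS by simp
    qed
  qed
qed

lemma rsq: fixes a x y :: real assumes "0 < a" "a \<le> x" "a \<le> y"
  shows "(x*y) powr (-1/2) \<le> 1/a"
proof -
  have xy: "0 < x*y" using assms by (simp add: mult_pos_pos)
  have "a * a \<le> x * y" using assms by (intro mult_mono) auto
  then have "a \<le> sqrt (x*y)" by (intro real_le_rsqrt) (simp add: power2_eq_square)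
  moreover have "(x*y) powr (-1/2) = 1 / sqrt (x*y)"
    using xy by (simp add: powr_minus_divide powr_half_sqrt[symmetric])
  ultimately show ?thesis using assms xy by (simp add: frac_le)
qed

context mms begin

lemma m_dbl1: "0 < r \<Longrightarrow> r \<le> 8 \<Longrightarrow> cball x s \<subseteq> cball y (2*r) \<Longrightarrow> m x s \<le> Cd * m y r"
  using m_mono[of x s y "2*r"] m_dbl[of r y] by simp

lemma m_dbl2: "0 < r \<Longrightarrow> r \<le> 2 \<Longrightarrow> cball x s \<subseteq> cball y (4*r) \<Longrightarrow> m x s \<le> Cd^2 * m y r"
proof -
  assume a: "0 < r" "r \<le> 2" "cball x s \<subseteq> cball y (4*r)"
  have "m x s \<le> Cd * m y (2*r)" using a by (intro m_dbl1) auto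
  also have "\<dots> \<le> Cd * (Cd * m y r)" using a Cd by (intro mult_left_mono m_dbl) auto
  finally show ?thesis by (simp add: power2_eq_square)
qed

end

locale comp = mms M Cd for M :: "'a::polish_space measure" and Cd :: real +
  fixes th :: real and S :: "'a set" and k1 k2 :: real
  assumes S_closed: "closed S" and k1: "0 < k1" and k2: "0 < k2"
    and adr_low: "x \<in> S \<Longrightarrow> 0 < r \<Longrightarrow> r \<le> 1 \<Longrightarrow>
        ennreal k1 * emeasure M (cball x r) * ennreal (r powr (-th)) \<le> Hth M th (cball x r \<inter> S)"
    and adr_up: "x \<in> S \<Longrightarrow> 0 < r \<Longrightarrow> r \<le> 1 \<Longrightarrow>
        Hth M th (cball x r \<inter> S) \<le> ennreal k2 * emeasure M (cball x r) * ennreal (r powr (-th))"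
begin

abbreviation "nu \<equiv> Hrestr M th S"

definition ND where "ND \<longleftrightarrow> measure_space UNIV (sets borel) (Hth M th)"

definition V where "V x r = emeasure nu (cball x r)"

lemma sets_nu[measurable_cong]: "sets nu = sets borel"
  by (rule sets_Hrestr)

lemma space_nu[simp]: "space nu = UNIV"
  using sets_eq_imp_space_eq[OF sets_nu] by simp

lemma S_borel[measurable]: "S \<in> sets borel"
  using S_closed by (simp add: borel_closed)

lemma emeasure_nu: assumes E[measurable]: "E \<in> sets borel"
  shows "emeasure nu E = emeasure (Hmeas M th) (E \<inter> S)"
proof -
  have [measurable_cong]: "sets (Hmeas M th) = sets borel" by (rule sets_Hmeas)
  have "emeasure nu E = (\<integral>\<^sup>+x. indicator S x * indicator E x \<partial>Hmeas M th)"
    unfolding Hrestr_def by (subst emeasure_density) auto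
  also have "\<dots> = (\<integral>\<^sup>+x. indicator (E \<inter> S) x \<partial>Hmeas M th)"
    by (intro nn_integral_cong) (auto simp: indicator_def)
  also have "\<dots> = emeasure (Hmeas M th) (E \<inter> S)"
    by (subst nn_integral_indicator) auto
  finally show ?thesis .
qed

lemma emeasure_nu_le: "E \<in> sets borel \<Longrightarrow> emeasure nu E \<le> Hth M th (E \<inter> S)"
  by (simp add: emeasure_nu emeasure_Hmeas_conv)

lemma emeasure_nu_ND: "ND \<Longrightarrow> E \<in> sets borel \<Longrightarrow> emeasure nu E = Hth M th (E \<inter> S)"
  by (simp add: emeasure_nu emeasure_Hmeas_conv ND_def)

lemma emeasure_nu_nonND: "\<not> ND \<Longrightarrow> E \<in> sets borel \<Longrightarrow> emeasure nu E = 0"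
  by (simp add: emeasure_nu emeasure_Hmeas_conv ND_def)

lemma AE_nonND: assumes "\<not> ND" shows "AE x in nu. P x"
  by (rule AE_I[of _ _ UNIV]) (use emeasure_nu_nonND[OF assms] in auto)

lemma nn_integral_nonND: "\<not> ND \<Longrightarrow> (\<integral>\<^sup>+x. f x \<partial>nu) = 0"
  by (subst nn_integral_cong_AE[where v="\<lambda>_. 0"]) (auto intro: AE_nonND)

lemma AE_S: "AE x in nu. x \<in> S"
  by (rule AE_I[of _ _ "-S"]) (auto simp: emeasure_nu S_closed)

lemma V_le: "x \<in> S \<Longrightarrow> 0 < r \<Longrightarrow> r \<le> 1 \<Longrightarrow> V x r \<le> ennreal (k2 * m x r * r powr (-th))"
  using emeasure_nu_le[of "cball x r"] adr_up[of x r] k2 m_nonneg[of x r]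
  by (simp add: V_def emeasure_m ennreal_mult)

lemma V_ge: "ND \<Longrightarrow> x \<in> S \<Longrightarrow> 0 < r \<Longrightarrow> r \<le> 1 \<Longrightarrow> ennreal (k1 * m x r * r powr (-th)) \<le> V x r"
  using emeasure_nu_ND[of "cball x r"] adr_low[of x r] k1 m_nonneg[of x r]
  by (simp add: V_def emeasure_m ennreal_mult)

lemma V_fin: "x \<in> S \<Longrightarrow> 0 < r \<Longrightarrow> r \<le> 1 \<Longrightarrow> V x r < \<infinity>"
  using V_le[of x r] by (simp add: le_less_trans)

lemma V_pos: "ND \<Longrightarrow> x \<in> S \<Longrightarrow> 0 < r \<Longrightarrow> r \<le> 1 \<Longrightarrow> 0 < V x r"
proof -
  assume a: "ND" "x \<in> S" "0 < r" "r \<le> 1"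
  have "0 < k1 * m x r * r powr (-th)" using k1 m_pos[of r x] a by simp
  then show ?thesis using V_ge[OF a] by (meson ennreal_less_zero_iff less_le_trans)
qed

lemma sigma_finite_nu: "sigma_finite_measure nu"
proof
  obtain F where F: "F \<subseteq> (\<lambda>x. ball x 1) ` S" "countable F" "\<Union>F = \<Union>((\<lambda>x. ball x 1) ` S)"
    using Lindelof[of "(\<lambda>x. ball x 1) ` S"] by auto
  then obtain C where C: "countable C" "C \<subseteq> S" "F = (\<lambda>x. ball x 1) ` C"
    using countable_subset_image[of F "\<lambda>x. ball x 1" S] by blast
  define A where "A = insert (-S) ((\<lambda>x. cball x 1) ` C)"
  have "countable A" using C unfolding A_def by auto
  moreover have "A \<subseteq> sets nu" unfolding A_def by auto
  moreover have "\<Union>A = space nu"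
  proof -
    have "S \<subseteq> \<Union>F" using F(3) by force
    then have "S \<subseteq> \<Union>((\<lambda>x. cball x 1) ` C)" using C(3) by force
    then show ?thesis unfolding A_def by auto
  qed
  moreover have "\<forall>a\<in>A. emeasure nu a \<noteq> \<infinity>"
  proof
    fix a assume "a \<in> A"
    then consider "a = -S" | x where "x \<in> S" "a = cball x 1"
      unfolding A_def using C(2) by auto
    then show "emeasure nu a \<noteq> \<infinity>"
    proof cases
      case 1 then show ?thesis by (simp add: emeasure_nu S_closed)
    next
      case 2 then show ?thesis using V_fin[of x 1] by (simp add: V_def)
    qed
  qed
  ultimately show "\<exists>A. countable A \<and> A \<subseteq> sets nu \<and> \<Union> A = space nu \<and> (\<forall>a\<in>A. emeasure nu a \<noteq> \<infinity>)"
    by blast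
qed


sublocale nu: sigma_finite_measure nu by (rule sigma_finite_nu)

lemma V_meas[measurable]: "(\<lambda>x. V x r) \<in> borel_measurable borel"
proof -
  let ?Q = "{p::'a\<times>'a. dist (fst p) (snd p) \<le> r}"
  have "?Q \<in> sets (borel \<Otimes>\<^sub>M nu)"
    using closed_distle[of r] unfolding sets_pair_measure_cong[OF refl sets_nu] borel_prod by (simp add: borel_closed)
  from nu.measurable_emeasure_Pair[OF this]
  show ?thesis by (simp add: vimage_def cball_def V_def)
qed

lemma set_integral_conv:
  assumes g[measurable]: "g \<in> borel_measurable borel" and E[measurable]: "E \<in> sets borel"
  shows "(\<integral>\<^sup>+x\<in>E \<inter> S. g x \<partial>Hmeas M th) = (\<integral>\<^sup>+x. indicator E x * g x \<partial>nu)"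
proof -
  have [measurable_cong]: "sets (Hmeas M th) = sets borel" by (rule sets_Hmeas)
  show ?thesis
    unfolding Hrestr_def by (subst nn_integral_density) (auto intro!: nn_integral_cong simp: indicator_def)
qed

lemma Av_conv:
  assumes g[measurable]: "g \<in> borel_measurable borel"
  shows "Av (Hmeas M th) (cball y r \<inter> S) g =
     (if 0 < V y r then (\<integral>\<^sup>+x. indicator (cball y r) x * g x \<partial>nu) / V y r else 0)"
  unfolding Av_def using emeasure_nu[of "cball y r"] set_integral_conv[OF g, of "cball y r"]
  by (simp add: V_def)


lemma V_mono: "cball x r \<subseteq> cball y s \<Longrightarrow> V x r \<le> V y s"
  unfolding V_def by (rule emeasure_mono) auto

lemma W_bound:
  assumes r: "0 < r" "r \<le> 1/2"
  shows "(\<integral>\<^sup>+z. indicator (cball y r) z * ennreal ((m y r * m z r) powr (-1/2)) \<partial>nu)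
           \<le> ennreal (k2 * Cd^2 * (2*r) powr (-th))"
proof (cases "\<exists>z0\<in>S. dist y z0 \<le> r")
  case True
  then obtain z0 where z0: "z0 \<in> S" "dist y z0 \<le> r" by blast
  define a where "a = m z0 (2*r) / Cd^2"
  have Cdp: "0 < Cd" using Cd by simp
  have a: "0 < a" using m_pos[of "2*r" z0] r Cdp unfolding a_def by simp
  have pw: "indicator (cball y r) z * ennreal ((m y r * m z r) powr (-1/2))
      \<le> ennreal (1/a) * indicator (cball y r) z" for z
  proof (cases "z \<in> cball y r")
    case True
    have "m z0 (2*r) \<le> Cd^2 * m y r"
    proof (rule m_dbl2)
      show "cball z0 (2*r) \<subseteq> cball y (4*r)"
      proof
        fix w assume "w \<in> cball z0 (2*r)"
        then have "dist z0 w \<le> 2*r" by simp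
        then show "w \<in> cball y (4*r)" using z0 r dist_triangle[of y w z0] by simp
      qed
    qed (use r in auto)
    then have 1: "a \<le> m y r" using Cdp unfolding a_def by (simp add: field_simps)
    have "m z0 (2*r) \<le> Cd^2 * m z r"
    proof (rule m_dbl2)
      show "cball z0 (2*r) \<subseteq> cball z (4*r)"
      proof
        fix w assume "w \<in> cball z0 (2*r)"
        then have "dist z0 w \<le> 2*r" by simp
        moreover have "dist z z0 \<le> 2*r" using True z0 dist_triangle[of z z0 y] by (simp add: dist_commute)
        ultimately show "w \<in> cball z (4*r)" using dist_triangle[of z w z0] by simp
      qed
    qed (use r in auto)
    then have 2: "a \<le> m z r" using Cdp unfolding a_def by (simp add: field_simps)
    show ?thesis using True rsq[OF a 1 2] by (simp add: ennreal_leI)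
  qed simp
  have "(\<integral>\<^sup>+z. indicator (cball y r) z * ennreal ((m y r * m z r) powr (-1/2)) \<partial>nu)
      \<le> (\<integral>\<^sup>+z. ennreal (1/a) * indicator (cball y r) z \<partial>nu)"
    by (intro nn_integral_mono pw)
  also have "\<dots> = ennreal (1/a) * V y r" by (subst nn_integral_cmult_indicator) (auto simp: V_def)
  also have "\<dots> \<le> ennreal (1/a) * V z0 (2*r)"
  proof (intro mult_left_mono V_mono)
    show "cball y r \<subseteq> cball z0 (2*r)"
    proof
      fix w assume "w \<in> cball y r"
      then have "dist y w \<le> r" by simp
      then show "w \<in> cball z0 (2*r)" using z0 dist_triangle[of z0 w y] by (simp add: dist_commute)
    qed
  qed simp
  also have "\<dots> \<le> ennreal (1/a) * ennreal (k2 * m z0 (2*r) * (2*r) powr (-th))"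
    using r z0 by (intro mult_left_mono V_le) auto
  also have "\<dots> = ennreal (1/a * (k2 * m z0 (2*r) * (2*r) powr (-th)))"
    by (rule ennreal_mult[symmetric]) (use a k2 m_nonneg in auto)
  also have "\<dots> = ennreal (k2 * Cd^2 * (2*r) powr (-th))"
    using a Cdp m_pos[of "2*r" z0] r by (simp add: a_def field_simps)
  finally show ?thesis .
next
  case False
  have "AE z in nu. indicator (cball y r) z * ennreal ((m y r * m z r) powr (-1/2)) = 0"
    using AE_S by eventually_elim (use False in auto)
  then show ?thesis by (subst nn_integral_cong_AE[where v="\<lambda>_. 0"]) auto
qed

end

lemma pred_cball[measurable]:
  fixes f g :: "'b \<Rightarrow> 'a::{metric_space,second_countable_topology}"
  assumes [measurable]: "f \<in> borel_measurable N" "g \<in> borel_measurable N"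
  shows "Measurable.pred N (\<lambda>x. g x \<in> cball (f x) r)"
  unfolding mem_cball by measurable

lemma Av_mono: "(\<And>x. g x \<le> h x) \<Longrightarrow> Av m G g \<le> Av m G h"
  unfolding Av_def by (auto intro!: divide_right_mono_ennreal nn_integral_mono mult_right_mono)

lemma ball_swap:
  fixes nu :: "'a::polish_space measure"
  assumes sf: "sigma_finite_measure nu" and sets[measurable_cong]: "sets nu = sets borel"
    and g[measurable]: "g \<in> borel_measurable borel"
  shows "(\<integral>\<^sup>+x. (\<integral>\<^sup>+x'. indicator (cball x r) x' * g x' \<partial>nu) \<partial>nu)
       = (\<integral>\<^sup>+x'. g x' * emeasure nu (cball x' r) \<partial>nu)"
proof -
  interpret pair_sigma_finite nu nu using sf by (simp add: pair_sigma_finite_def)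
  have [measurable]: "g \<in> borel_measurable nu" using g by (simp add: measurable_cong_sets[OF sets refl])
  have "(\<integral>\<^sup>+x. (\<integral>\<^sup>+x'. indicator (cball x r) x' * g x' \<partial>nu) \<partial>nu)
      = (\<integral>\<^sup>+x'. (\<integral>\<^sup>+x. indicator (cball x r) x' * g x' \<partial>nu) \<partial>nu)"
    by (rule Fubini'[symmetric]) measurable
  also have "\<dots> = (\<integral>\<^sup>+x'. (\<integral>\<^sup>+x. g x' * indicator (cball x' r) x \<partial>nu) \<partial>nu)"
    by (intro nn_integral_cong) (auto simp: indicator_def dist_commute mult.commute)
  also have "\<dots> = (\<integral>\<^sup>+x'. g x' * emeasure nu (cball x' r) \<partial>nu)"
    by (intro nn_integral_cong) (simp add: nn_integral_cmult)
  finally show ?thesis .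
qed



lemma div_ennreal: "0 < v \<Longrightarrow> x / ennreal v = x * ennreal (1/v)"
  by (simp add: divide_ennreal_def inverse_ennreal divide_inverse)

lemma powr_neg_half: "0 < P \<Longrightarrow> P powr (-1/2) = 1 / sqrt P"
  by (simp add: powr_minus_divide powr_half_sqrt[symmetric])

lemma inv_sqrt_mono: fixes P Q :: real assumes "0 < Q" "Q \<le> P" shows "1/(sqrt P * P) \<le> 1/(sqrt Q * Q)"
  using assms by (intro divide_left_mono mult_mono real_sqrt_le_mono) (auto intro: mult_pos_pos)

lemma real_key:
  fixes a1 a2 my mz my' mz' v1 v2 r1 r2 Cd :: real
  assumes pos: "0<a1" "0<a2" "0 < my" "0<mz" "0<my'" "0<mz'" "0<r1" "0<r2" "0<Cd"
    and d: "my' \<le> Cd*my" "mz' \<le> Cd*mz" and v: "a1*my*r1 \<le> v1" "a2*mz*r2 \<le> v2"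
  shows "(my*mz) powr (-1/2) * (1 / (v1 * v2)) \<le> Cd^3/(a1*a2) * (1/(r1*r2)) * (1/(sqrt(my'*mz')*(my'*mz')))"
proof -
  define P where "P = my*mz"
  define P' where "P' = my'*mz'"
  have P: "0 < P" "0 < P'" using pos unfolding P_def P'_def by auto
  have "P' \<le> (Cd*my)*(Cd*mz)" unfolding P'_def using pos d by (intro mult_mono) auto
  then have PP: "P'/Cd^2 \<le> P" unfolding P_def using pos by (simp add: field_simps power2_eq_square)
  have "1/(sqrt P * P) \<le> 1/(sqrt (P'/Cd^2) * (P'/Cd^2))"
    by (rule inv_sqrt_mono) (use P pos PP in auto)
  also have "\<dots> = Cd^3 / (sqrt P' * P')"
    using P pos by (simp add: real_sqrt_divide power2_eq_square power3_eq_cube field_simps)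
  finally have k: "1/(sqrt P * P) \<le> Cd^3 / (sqrt P' * P')" .
  have "0 < a1*my*r1" "0 < a2*mz*r2" using pos by auto
  then have vv: "a1*my*r1 * (a2*mz*r2) \<le> v1 * v2" using v by (intro mult_mono) auto
  have vpos: "0 < a1*my*r1 * (a2*mz*r2)" using pos by simp
  have "(my*mz) powr (-1/2) * (1 / (v1 * v2)) \<le> (1 / sqrt P) * (1 / (a1*my*r1 * (a2*mz*r2)))"
  proof -
    have e: "(my*mz) powr (-1/2) = 1 / sqrt P" unfolding P_def by (rule powr_neg_half) (use P in \<open>simp add: P_def\<close>)
    have "1 / (v1 * v2) \<le> 1 / (a1*my*r1 * (a2*mz*r2))"
      using vv vpos by (intro divide_left_mono) auto
    then show ?thesis unfolding e using P by (intro mult_left_mono) auto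
  qed
  also have "\<dots> = (1/(a1*a2*r1*r2)) * (1/(sqrt P * P))"
    unfolding P_def by (simp add: field_simps)
  also have "\<dots> \<le> (1/(a1*a2*r1*r2)) * (Cd^3 / (sqrt P' * P'))"
    using k pos by (intro mult_left_mono) auto
  also have "\<dots> = Cd^3/(a1*a2) * (1/(r1*r2)) * (1/(sqrt(my'*mz')*(my'*mz')))"
    unfolding P'_def by (simp add: field_simps)
  finally show ?thesis .
qed

context comp begin

lemma Av_F_bound:
  fixes F :: "'a \<Rightarrow> ennreal"
  assumes F[measurable]: "F \<in> borel_measurable borel" and ND: ND and y: "y \<in> S" and r: "0 < r" "r \<le> 1"
  shows "Av (Hmeas M th) (cball y r \<inter> S) F \<le>
     ennreal (Cd / (k1 * r powr (-th))) * (\<integral>\<^sup>+y'. indicator (cball y r) y' * F y' * ennreal (1 / m y' r) \<partial>nu)"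
proof -
  obtain v where v: "V y r = ennreal v" "0 < v"
    using V_pos[OF ND y r] V_fin[OF y r] by (cases "V y r") auto
  have vge: "k1 * m y r * r powr (-th) \<le> v" using V_ge[OF ND y r] v by (simp add: ennreal_le_iff)
  have my: "0 < m y r" using m_pos r by auto
  have "Av (Hmeas M th) (cball y r \<inter> S) F = (\<integral>\<^sup>+y'. indicator (cball y r) y' * F y' \<partial>nu) * ennreal (1/v)"
    by (subst Av_conv) (auto simp: v div_ennreal)
  also have "\<dots> = (\<integral>\<^sup>+y'. indicator (cball y r) y' * F y' * ennreal (1/v) \<partial>nu)"
    by (rule nn_integral_multc[symmetric]) measurable
  also have "\<dots> \<le> (\<integral>\<^sup>+y'. ennreal (Cd / (k1 * r powr (-th))) * (indicator (cball y r) y' * F y' * ennreal (1 / m y' r)) \<partial>nu)"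
  proof (intro nn_integral_mono)
    fix y'
    show "indicator (cball y r) y' * F y' * ennreal (1/v) \<le> ennreal (Cd / (k1 * r powr (-th))) * (indicator (cball y r) y' * F y' * ennreal (1 / m y' r))"
    proof (cases "y' \<in> cball y r")
      case True
      have sub: "cball y' r \<subseteq> cball y (2*r)"
      proof
        fix w assume "w \<in> cball y' r" then show "w \<in> cball y (2*r)"
          using True dist_triangle[of y w y'] by simp
      qed
      have d: "m y' r \<le> Cd * m y r" using m_dbl1[OF r(1) _ sub] r by simp
      have my': "0 < m y' r" using m_pos r by auto
      have pp: "0 < k1 * m y r * r powr (-th)" using k1 my r by simp
      have "1/v \<le> 1 / (k1 * m y r * r powr (-th))"
        using vge pp v(2) by (intro divide_left_mono) auto
      also have "\<dots> \<le> Cd / (k1 * r powr (-th)) * (1 / m y' r)"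
        using d k1 my my' r Cd by (simp add: field_simps)
      finally have le: "1/v \<le> Cd / (k1 * r powr (-th)) * (1 / m y' r)" .
      have "F y' * ennreal (1/v) \<le> F y' * ennreal (Cd / (k1 * r powr (-th)) * (1 / m y' r))"
        using le by (intro mult_left_mono ennreal_leI) auto
      also have "\<dots> = ennreal (Cd / (k1 * r powr (-th))) * (F y' * ennreal (1 / m y' r))"
        using my' by (subst ennreal_mult'') (auto simp: mult_ac)
      finally show ?thesis using True by simp
    qed simp
  qed
  also have "\<dots> = ennreal (Cd / (k1 * r powr (-th))) * (\<integral>\<^sup>+y'. indicator (cball y r) y' * F y' * ennreal (1 / m y' r) \<partial>nu)"
    by (rule nn_integral_cmult) measurable
  finally show ?thesis .
qed

lemma Bm_int:
  fixes F :: "'a \<Rightarrow> ennreal"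
  assumes F[measurable]: "F \<in> borel_measurable borel" and r: "0 < r" "r \<le> 1"
  shows "(\<integral>\<^sup>+y. \<integral>\<^sup>+y'. indicator (cball y r) y' * (F y' * ennreal (1 / m y' r)) \<partial>nu \<partial>nu)
     \<le> ennreal (k2 * r powr (-th)) * (\<integral>\<^sup>+y. F y \<partial>nu)"
proof -
  have "(\<integral>\<^sup>+y. \<integral>\<^sup>+y'. indicator (cball y r) y' * (F y' * ennreal (1 / m y' r)) \<partial>nu \<partial>nu)
     = (\<integral>\<^sup>+y'. (F y' * ennreal (1 / m y' r)) * V y' r \<partial>nu)"
    unfolding V_def by (rule ball_swap[OF sigma_finite_nu sets_nu]) measurable
  also have "\<dots> \<le> (\<integral>\<^sup>+y'. ennreal (k2 * r powr (-th)) * F y' \<partial>nu)"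
  proof (rule nn_integral_mono_AE)
    show "AE y' in nu. F y' * ennreal (1 / m y' r) * V y' r \<le> ennreal (k2 * r powr (-th)) * F y'"
      using AE_S
    proof eventually_elim
      case (elim y')
      have my: "0 < m y' r" using m_pos r by auto
      have "F y' * ennreal (1 / m y' r) * V y' r \<le> F y' * ennreal (1 / m y' r) * ennreal (k2 * m y' r * r powr (-th))"
        using V_le[OF elim r] by (intro mult_left_mono) auto
      also have "\<dots> = F y' * ennreal (1 / m y' r * (k2 * m y' r * r powr (-th)))"
        using my k2 by (subst ennreal_mult''[of _ "1 / m y' r"]) (auto simp: mult.assoc)
      also have "1 / m y' r * (k2 * m y' r * r powr (-th)) = k2 * r powr (-th)"
        using my by (simp add: field_simps)
      also have "F y' * ennreal (k2 * r powr (-th)) = ennreal (k2 * r powr (-th)) * F y'"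
        by (simp add: mult.commute)
      finally show ?case .
    qed
  qed
  also have "\<dots> = ennreal (k2 * r powr (-th)) * (\<integral>\<^sup>+y. F y \<partial>nu)"
    by (rule nn_integral_cmult) measurable
  finally show ?thesis .
qed

end

lemma Av_lin:
  fixes g :: "'b \<Rightarrow> ennreal"
  assumes pos: "0 < emeasure m G" and fin: "emeasure m G < \<infinity>" and G[measurable]: "G \<in> sets m"
    and g[measurable]: "g \<in> borel_measurable m"
  shows "Av m G (\<lambda>x. c * (a + g x)) = c * (a + Av m G g)"
proof -
  obtain v where v: "emeasure m G = ennreal v" "0 < v" using pos fin by (cases "emeasure m G") auto
  have "(\<integral>\<^sup>+x\<in>G. c * (a + g x) \<partial>m) = (\<integral>\<^sup>+x. c * (a * indicator G x) + c * (g x * indicator G x) \<partial>m)"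
    by (intro nn_integral_cong) (simp add: distrib_left distrib_right mult_ac)
  also have "\<dots> = (\<integral>\<^sup>+x. c * (a * indicator G x) \<partial>m) + (\<integral>\<^sup>+x. c * (g x * indicator G x) \<partial>m)"
    by (rule nn_integral_add) measurable
  also have "\<dots> = c * (a * emeasure m G) + c * (\<integral>\<^sup>+x\<in>G. g x \<partial>m)"
  proof -
    have e1: "(\<integral>\<^sup>+x. c * (a * indicator G x) \<partial>m) = c * (a * emeasure m G)"
      by (subst nn_integral_cmult) (auto simp: nn_integral_cmult_indicator)
    have e2: "(\<integral>\<^sup>+x. c * (g x * indicator G x) \<partial>m) = c * (\<integral>\<^sup>+x\<in>G. g x \<partial>m)"
      by (rule nn_integral_cmult) measurable
    show ?thesis unfolding e1 e2 ..
  qed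
  finally have "(\<integral>\<^sup>+x\<in>G. c * (a + g x) \<partial>m) = c * (a * ennreal v + (\<integral>\<^sup>+x\<in>G. g x \<partial>m))"
    by (simp only: v(1) distrib_left)
  then have "Av m G (\<lambda>x. c * (a + g x)) = c * (a * ennreal v + (\<integral>\<^sup>+x\<in>G. g x \<partial>m)) * ennreal (1/v)"
    using v by (simp add: Av_def div_ennreal)
  also have "\<dots> = c * (a * (ennreal v * ennreal (1/v)) + (\<integral>\<^sup>+x\<in>G. g x \<partial>m) * ennreal (1/v))"
    by (simp add: distrib_right distrib_left mult_ac)
  also have "ennreal v * ennreal (1/v) = 1" using v by (simp flip: ennreal_mult)
  finally show ?thesis using v by (simp add: Av_def div_ennreal)
qed

lemma powr_diff_le: fixes a b p :: real assumes p: "0 < p"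
  shows "\<bar>a - b\<bar> powr p \<le> 2 powr p * (\<bar>a\<bar> powr p + \<bar>b\<bar> powr p)"
proof -
  have "\<bar>a - b\<bar> \<le> 2 * max \<bar>a\<bar> \<bar>b\<bar>" by auto
  then have "\<bar>a - b\<bar> powr p \<le> (2 * max \<bar>a\<bar> \<bar>b\<bar>) powr p" using p by (intro powr_mono2) auto
  also have "\<dots> = 2 powr p * max \<bar>a\<bar> \<bar>b\<bar> powr p" by (subst powr_mult) auto
  also have "max \<bar>a\<bar> \<bar>b\<bar> powr p \<le> \<bar>a\<bar> powr p + \<bar>b\<bar> powr p" by (auto simp: max_def)
  finally show ?thesis by simp
qed

locale pairc = ci: comp M Cd th1 S1 a1 b1 + cj: comp M Cd th2 S2 a2 b2
  for M :: "'a::polish_space measure" and Cd th1 S1 a1 b1 th2 S2 a2 b2 +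
  fixes p :: real and f :: "'a \<Rightarrow> real"
  assumes p: "1 < p" and f[measurable]: "f \<in> borel_measurable borel"
    and ND1: "ci.ND" and ND2: "cj.ND"
begin

abbreviation "nu1 \<equiv> ci.nu"
abbreviation "nu2 \<equiv> cj.nu"

definition G :: "'a \<Rightarrow> 'a \<Rightarrow> ennreal" where "G y z = ennreal (\<bar>f y - f z\<bar> powr p)"

definition A :: "real \<Rightarrow> 'a \<Rightarrow> 'a \<Rightarrow> ennreal" where
  "A r y z = Av (Hmeas M th1) (cball y r \<inter> S1)
       (\<lambda>y'. Av (Hmeas M th2) (cball z r \<inter> S2) (\<lambda>z'. ennreal \<bar>f y' - f z'\<bar>))"

lemma G_meas[measurable]: "(\<lambda>(y, z). G y z) \<in> borel_measurable (borel \<Otimes>\<^sub>M borel)"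
  unfolding G_def by measurable

lemma G_meas1[measurable]: "(\<lambda>z. G y z) \<in> borel_measurable borel"
  unfolding G_def by measurable

lemma G_meas2[measurable]: "(\<lambda>y. G y z) \<in> borel_measurable borel"
  unfolding G_def by measurable

lemma P1:
  assumes r: "0 < r" "r \<le> 1" and y: "y \<in> S1" and z: "z \<in> S2"
  shows "epowr (A r y z) p \<le>
    (\<integral>\<^sup>+y'. indicator (cball y r) y' * (\<integral>\<^sup>+z'. indicator (cball z r) z' * G y' z' \<partial>nu2) \<partial>nu1)
      * ennreal (1 / (enn2real (ci.V y r) * enn2real (cj.V z r)))"
proof -
  have [measurable_cong]: "sets (Hmeas M th1) = sets borel" "sets (Hmeas M th2) = sets borel"
    by (rule sets_Hmeas)+
  obtain v1 where v1: "ci.V y r = ennreal v1" "0 < v1"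
    using ci.V_pos[OF ND1 y r] ci.V_fin[OF y r] by (cases "ci.V y r") auto
  obtain v2 where v2: "cj.V z r = ennreal v2" "0 < v2"
    using cj.V_pos[OF ND2 z r] cj.V_fin[OF z r] by (cases "cj.V z r") auto
  define h where "h y' = Av (Hmeas M th2) (cball z r \<inter> S2) (\<lambda>z'. ennreal \<bar>f y' - f z'\<bar>)" for y'
  have h_eq: "h y' = (\<integral>\<^sup>+z'. indicator (cball z r) z' * ennreal \<bar>f y' - f z'\<bar> \<partial>nu2) * ennreal (1/v2)" for y'
    unfolding h_def by (subst cj.Av_conv) (auto simp: v2 div_ennreal)
  have h_meas: "h \<in> borel_measurable borel"
    unfolding h_eq[abs_def] by measurable
  have em1: "emeasure (Hmeas M th1) (cball y r \<inter> S1) = ci.V y r"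
    using ci.emeasure_nu[of "cball y r"] by (simp add: ci.V_def)
  have em2: "emeasure (Hmeas M th2) (cball z r \<inter> S2) = cj.V z r"
    using cj.emeasure_nu[of "cball z r"] by (simp add: cj.V_def)
  have "epowr (A r y z) p \<le> Av (Hmeas M th1) (cball y r \<inter> S1) (\<lambda>y'. epowr (h y') p)"
    unfolding A_def h_def[symmetric]
    by (rule jensen_av) (use p em1 v1 h_meas in \<open>auto simp: measurable_cong_sets[OF sets_Hmeas refl]\<close>)
  also have "\<dots> \<le> Av (Hmeas M th1) (cball y r \<inter> S1) (\<lambda>y'. Av (Hmeas M th2) (cball z r \<inter> S2) (\<lambda>z'. G y' z'))"
  proof (rule Av_mono)
    fix y'
    have "epowr (h y') p \<le> Av (Hmeas M th2) (cball z r \<inter> S2) (\<lambda>z'. epowr (ennreal \<bar>f y' - f z'\<bar>) p)"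
      unfolding h_def by (rule jensen_av) (use p em2 v2 in auto)
    then show "epowr (h y') p \<le> Av (Hmeas M th2) (cball z r \<inter> S2) (\<lambda>z'. G y' z')"
      by (simp add: epowr_ennreal G_def)
  qed
  also have "\<dots> = (\<integral>\<^sup>+y'. indicator (cball y r) y' * ((\<integral>\<^sup>+z'. indicator (cball z r) z' * G y' z' \<partial>nu2) * ennreal (1/v2)) \<partial>nu1) * ennreal (1/v1)"
    apply (subst cj.Av_conv, measurable)
    apply (simp add: v2 div_ennreal)
    apply (subst ci.Av_conv, measurable)
    apply (simp add: v1 v2 div_ennreal)
    done
  also have "\<dots> = (\<integral>\<^sup>+y'. indicator (cball y r) y' * (\<integral>\<^sup>+z'. indicator (cball z r) z' * G y' z' \<partial>nu2) \<partial>nu1) * ennreal (1/v2) * ennreal (1/v1)"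
    by (subst nn_integral_multc[symmetric]) (auto simp: mult.assoc)
  also have "\<dots> = (\<integral>\<^sup>+y'. indicator (cball y r) y' * (\<integral>\<^sup>+z'. indicator (cball z r) z' * G y' z' \<partial>nu2) \<partial>nu1)
      * ennreal (1 / (enn2real (ci.V y r) * enn2real (cj.V z r)))"
  proof -
    have "ennreal (1 / (v1 * v2)) = ennreal (1/v1) * ennreal (1/v2)"
      using v1 v2 by (subst ennreal_mult[symmetric]) auto
    then show ?thesis using v1 v2 by (simp add: mult_ac)
  qed
  finally show ?thesis .
qed


definition Psi :: "real \<Rightarrow> 'a \<Rightarrow> 'a \<Rightarrow> ennreal" where
  "Psi r y' z' = ennreal (if dist y' z' \<le> 3*r then 1/(sqrt (ci.m y' r * ci.m z' r) * (ci.m y' r * ci.m z' r)) else 0) * G y' z'"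

lemma Psi_meas[measurable]: "(\<lambda>(y, z). Psi r y z) \<in> borel_measurable (borel \<Otimes>\<^sub>M borel)"
  unfolding Psi_def G_def by measurable

lemma Psi_meas1[measurable]: "(\<lambda>z. Psi r y z) \<in> borel_measurable borel"
  unfolding Psi_def G_def by measurable

lemma P12:
  assumes r: "0 < r" "r \<le> 1" and y: "y \<in> S1" and z: "z \<in> S2" and yz: "dist y z \<le> r"
  shows "ennreal ((ci.m y r * ci.m z r) powr (-1/2)) * epowr (A r y z) p \<le>
     ennreal (Cd^3/(a1*a2) * (1/(r powr (-th1) * r powr (-th2)))) *
       (\<integral>\<^sup>+y'. \<integral>\<^sup>+z'. indicator (cball y r) y' * indicator (cball z r) z' * Psi r y' z' \<partial>nu2 \<partial>nu1)"
proof -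
  define W where "W = (ci.m y r * ci.m z r) powr (-1/2)"
  define v1 where "v1 = enn2real (ci.V y r)"
  define v2 where "v2 = enn2real (cj.V z r)"
  define c where "c = 1 / (v1 * v2)"
  define K where "K = Cd^3/(a1*a2) * (1/(r powr (-th1) * r powr (-th2)))"
  have V1: "ci.V y r = ennreal v1" "0 \<le> v1" using ci.V_fin[OF y r] unfolding v1_def by (cases "ci.V y r") auto
  have V2: "cj.V z r = ennreal v2" "0 \<le> v2" using cj.V_fin[OF z r] unfolding v2_def by (cases "cj.V z r") auto
  have v1: "a1 * ci.m y r * r powr (-th1) \<le> v1"
    using ci.V_ge[OF ND1 y r] V1 by (simp add: ennreal_le_iff)
  have v2: "a2 * ci.m z r * r powr (-th2) \<le> v2"
    using cj.V_ge[OF ND2 z r] V2 by (simp add: ennreal_le_iff)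
  have Wc: "0 \<le> W" "0 \<le> c" "0 \<le> K" unfolding W_def c_def K_def using V1 V2 ci.k1 cj.k1 ci.Cd by auto
  define I where "I = (\<integral>\<^sup>+y'. indicator (cball y r) y' * (\<integral>\<^sup>+z'. indicator (cball z r) z' * G y' z' \<partial>nu2) \<partial>nu1)"
  have "ennreal W * epowr (A r y z) p \<le> ennreal W * (I * ennreal c)"
    using P1[OF r y z] unfolding I_def c_def v1_def v2_def by (rule mult_left_mono) simp
  also have "\<dots> = I * ennreal (W * c)"
    using Wc by (simp add: ennreal_mult mult_ac)
  also have "\<dots> = (\<integral>\<^sup>+y'. \<integral>\<^sup>+z'. indicator (cball y r) y' * indicator (cball z r) z' * G y' z' * ennreal (W * c) \<partial>nu2 \<partial>nu1)"
  proof -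
    have "I * ennreal (W * c) = (\<integral>\<^sup>+y'. (indicator (cball y r) y' * (\<integral>\<^sup>+z'. indicator (cball z r) z' * G y' z' \<partial>nu2)) * ennreal (W * c) \<partial>nu1)"
      unfolding I_def by (rule nn_integral_multc[symmetric]) measurable
    also have "\<dots> = (\<integral>\<^sup>+y'. \<integral>\<^sup>+z'. indicator (cball y r) y' * indicator (cball z r) z' * G y' z' * ennreal (W * c) \<partial>nu2 \<partial>nu1)"
    proof (rule nn_integral_cong)
      fix y'
      have "(\<integral>\<^sup>+z'. indicator (cball y r) y' * indicator (cball z r) z' * G y' z' * ennreal (W * c) \<partial>nu2)
          = (\<integral>\<^sup>+z'. indicator (cball y r) y' * (indicator (cball z r) z' * G y' z') * ennreal (W * c) \<partial>nu2)"
        by (simp add: mult.assoc)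
      also have "\<dots> = (\<integral>\<^sup>+z'. indicator (cball y r) y' * (indicator (cball z r) z' * G y' z') \<partial>nu2) * ennreal (W * c)"
        by (rule nn_integral_multc) measurable
      also have "\<dots> = indicator (cball y r) y' * (\<integral>\<^sup>+z'. indicator (cball z r) z' * G y' z' \<partial>nu2) * ennreal (W * c)"
        by (subst nn_integral_cmult) auto
      finally show "indicator (cball y r) y' * (\<integral>\<^sup>+z'. indicator (cball z r) z' * G y' z' \<partial>nu2) * ennreal (W * c)
          = (\<integral>\<^sup>+z'. indicator (cball y r) y' * indicator (cball z r) z' * G y' z' * ennreal (W * c) \<partial>nu2)" by simp
    qed
    finally show ?thesis .
  qed
  also have "\<dots> \<le> (\<integral>\<^sup>+y'. \<integral>\<^sup>+z'. ennreal K * (indicator (cball y r) y' * indicator (cball z r) z' * Psi r y' z') \<partial>nu2 \<partial>nu1)"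
  proof (intro nn_integral_mono)
    fix y' z'
    show "indicator (cball y r) y' * indicator (cball z r) z' * G y' z' * ennreal (W * c)
      \<le> ennreal K * (indicator (cball y r) y' * indicator (cball z r) z' * Psi r y' z')"
    proof (cases "y' \<in> cball y r \<and> z' \<in> cball z r")
      case True
      have d3: "dist y' z' \<le> 3*r"
        using True yz dist_triangle[of y' z' y] dist_triangle[of y z' z] by (simp add: dist_commute)
      have sub1: "cball y' r \<subseteq> cball y (2*r)"
      proof
        fix w assume "w \<in> cball y' r" then show "w \<in> cball y (2*r)"
          using True dist_triangle[of y w y'] by simp
      qed
      have sub2: "cball z' r \<subseteq> cball z (2*r)"
      proof
        fix w assume "w \<in> cball z' r" then show "w \<in> cball z (2*r)"
          using True dist_triangle[of z w z'] by simp
      qed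
      define coef where "coef = 1/(sqrt (ci.m y' r * ci.m z' r) * (ci.m y' r * ci.m z' r))"
      have coef0: "0 \<le> coef" unfolding coef_def using ci.m_nonneg by auto
      have key: "W * c \<le> K * coef"
        unfolding W_def c_def K_def coef_def
        by (rule real_key) (use ci.k1 cj.k1 ci.m_pos r ci.Cd ci.m_dbl1[OF _ _ sub1] ci.m_dbl1[OF _ _ sub2] v1 v2 in auto)
      have R: "ennreal K * (indicator (cball y r) y' * indicator (cball z r) z' * Psi r y' z') = ennreal (K * coef) * G y' z'"
        unfolding Psi_def coef_def[symmetric] using True d3 coef0 Wc by (simp add: ennreal_mult mult_ac)
      have L: "indicator (cball y r) y' * indicator (cball z r) z' * G y' z' * ennreal (W * c) = ennreal (W * c) * G y' z'"
        using True by (simp add: mult_ac)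
      show ?thesis unfolding L R using key by (intro mult_right_mono ennreal_leI) auto
    qed auto
  qed
  also have "\<dots> = ennreal K * (\<integral>\<^sup>+y'. \<integral>\<^sup>+z'. indicator (cball y r) y' * indicator (cball z r) z' * Psi r y' z' \<partial>nu2 \<partial>nu1)"
    by (simp add: nn_integral_cmult)
  finally show ?thesis unfolding W_def K_def .
qed


lemma swap4:
  fixes Q :: "'a \<times> 'a \<Rightarrow> ennreal"
  assumes Q[measurable]: "Q \<in> borel_measurable (borel \<Otimes>\<^sub>M borel)"
  shows "(\<integral>\<^sup>+y. \<integral>\<^sup>+z. \<integral>\<^sup>+y'. \<integral>\<^sup>+z'. indicator (cball y r) y' * indicator (cball z r) z' * Q (y', z') \<partial>nu2 \<partial>nu1 \<partial>nu2 \<partial>nu1)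
       = (\<integral>\<^sup>+y'. (\<integral>\<^sup>+z'. Q (y', z') * cj.V z' r \<partial>nu2) * ci.V y' r \<partial>nu1)"
proof -
  interpret pair_sigma_finite nu1 nu2
    by (simp add: pair_sigma_finite_def ci.sigma_finite_nu cj.sigma_finite_nu)
  define Phi where "Phi z y' = (\<integral>\<^sup>+z'. indicator (cball z r) z' * Q (y', z') \<partial>nu2)" for z y'
  have Phi_meas[measurable]: "(\<lambda>x. Phi (snd x) (fst x)) \<in> borel_measurable (nu1 \<Otimes>\<^sub>M nu2)"
    unfolding Phi_def by measurable
  have Phi_meas2[measurable]: "(\<lambda>z. Phi z y') \<in> borel_measurable borel" for y'
    unfolding Phi_def by measurable
  have s1: "(\<integral>\<^sup>+y'. \<integral>\<^sup>+z'. indicator (cball y r) y' * indicator (cball z r) z' * Q (y', z') \<partial>nu2 \<partial>nu1)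
     = (\<integral>\<^sup>+y'. indicator (cball y r) y' * Phi z y' \<partial>nu1)" for y z
    unfolding Phi_def by (intro nn_integral_cong) (simp add: nn_integral_cmult[symmetric] mult.assoc)
  have s2: "(\<integral>\<^sup>+z. \<integral>\<^sup>+y'. indicator (cball y r) y' * Phi z y' \<partial>nu1 \<partial>nu2)
     = (\<integral>\<^sup>+y'. indicator (cball y r) y' * (\<integral>\<^sup>+z. Phi z y' \<partial>nu2) \<partial>nu1)" for y
  proof -
    have "(\<integral>\<^sup>+z. \<integral>\<^sup>+y'. indicator (cball y r) y' * Phi z y' \<partial>nu1 \<partial>nu2)
      = (\<integral>\<^sup>+y'. \<integral>\<^sup>+z. indicator (cball y r) y' * Phi z y' \<partial>nu2 \<partial>nu1)"
      by (rule Fubini') measurable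
    also have "\<dots> = (\<integral>\<^sup>+y'. indicator (cball y r) y' * (\<integral>\<^sup>+z. Phi z y' \<partial>nu2) \<partial>nu1)"
      by (intro nn_integral_cong nn_integral_cmult) measurable
    finally show ?thesis .
  qed
  have s3: "(\<integral>\<^sup>+z. Phi z y' \<partial>nu2) = (\<integral>\<^sup>+z'. Q (y', z') * cj.V z' r \<partial>nu2)" for y'
    unfolding Phi_def cj.V_def by (rule ball_swap[OF cj.sigma_finite_nu cj.sets_nu]) measurable
  have "(\<integral>\<^sup>+y. \<integral>\<^sup>+z. \<integral>\<^sup>+y'. \<integral>\<^sup>+z'. indicator (cball y r) y' * indicator (cball z r) z' * Q (y', z') \<partial>nu2 \<partial>nu1 \<partial>nu2 \<partial>nu1)
     = (\<integral>\<^sup>+y. \<integral>\<^sup>+y'. indicator (cball y r) y' * (\<integral>\<^sup>+z'. Q (y', z') * cj.V z' r \<partial>nu2) \<partial>nu1 \<partial>nu1)"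
    by (simp add: s1 s2 s3)
  also have "\<dots> = (\<integral>\<^sup>+y'. (\<integral>\<^sup>+z'. Q (y', z') * cj.V z' r \<partial>nu2) * ci.V y' r \<partial>nu1)"
    unfolding ci.V_def by (rule ball_swap[OF ci.sigma_finite_nu ci.sets_nu]) measurable
  finally show ?thesis .
qed


lemma L1:
  assumes r: "0 < r" "r \<le> 1"
  shows "(\<integral>\<^sup>+y. \<integral>\<^sup>+z. (if dist y z \<le> r then ennreal ((ci.m y r * ci.m z r) powr (-1/2)) * epowr (A r y z) p else 0) \<partial>nu2 \<partial>nu1)
   \<le> ennreal (Cd^3/(a1*a2) * b1 * b2) *
     (\<integral>\<^sup>+y'. \<integral>\<^sup>+z'. ennreal (if dist y' z' \<le> 3*r then 1 / sqrt (ci.m y' r * ci.m z' r) else 0) * G y' z' \<partial>nu2 \<partial>nu1)"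
proof -
  define r1 where "r1 = r powr (-th1)"
  define r2 where "r2 = r powr (-th2)"
  define K where "K = Cd^3/(a1*a2) * (1/(r1 * r2))"
  have r12: "0 < r1" "0 < r2" using r unfolding r1_def r2_def by auto
  have K0: "0 \<le> K" unfolding K_def using r12 ci.k1 cj.k1 ci.Cd by auto
  have Q: "(\<lambda>x. Psi r (fst x) (snd x)) \<in> borel_measurable (borel \<Otimes>\<^sub>M borel)" by measurable
  have "(\<integral>\<^sup>+y. \<integral>\<^sup>+z. (if dist y z \<le> r then ennreal ((ci.m y r * ci.m z r) powr (-1/2)) * epowr (A r y z) p else 0) \<partial>nu2 \<partial>nu1)
     \<le> (\<integral>\<^sup>+y. \<integral>\<^sup>+z. ennreal K * (\<integral>\<^sup>+y'. \<integral>\<^sup>+z'. indicator (cball y r) y' * indicator (cball z r) z' * Psi r y' z' \<partial>nu2 \<partial>nu1) \<partial>nu2 \<partial>nu1)"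
  proof (rule nn_integral_mono_AE)
    show "AE y in nu1. (\<integral>\<^sup>+z. (if dist y z \<le> r then ennreal ((ci.m y r * ci.m z r) powr (-1/2)) * epowr (A r y z) p else 0) \<partial>nu2)
       \<le> (\<integral>\<^sup>+z. ennreal K * (\<integral>\<^sup>+y'. \<integral>\<^sup>+z'. indicator (cball y r) y' * indicator (cball z r) z' * Psi r y' z' \<partial>nu2 \<partial>nu1) \<partial>nu2)"
      using ci.AE_S
    proof eventually_elim
      case (elim y)
      show ?case
      proof (rule nn_integral_mono_AE)
        show "AE z in nu2. (if dist y z \<le> r then ennreal ((ci.m y r * ci.m z r) powr (-1/2)) * epowr (A r y z) p else 0)
          \<le> ennreal K * (\<integral>\<^sup>+y'. \<integral>\<^sup>+z'. indicator (cball y r) y' * indicator (cball z r) z' * Psi r y' z' \<partial>nu2 \<partial>nu1)"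
          using cj.AE_S
        proof eventually_elim
          case (elim z)
          show ?case using P12[OF r \<open>y \<in> S1\<close> \<open>z \<in> S2\<close>] unfolding K_def r1_def r2_def by auto
        qed
      qed
    qed
  qed
  also have "\<dots> = ennreal K * (\<integral>\<^sup>+y. \<integral>\<^sup>+z. \<integral>\<^sup>+y'. \<integral>\<^sup>+z'. indicator (cball y r) y' * indicator (cball z r) z' * Psi r (fst (y', z')) (snd (y', z')) \<partial>nu2 \<partial>nu1 \<partial>nu2 \<partial>nu1)"
  proof -
    have "(\<integral>\<^sup>+y. \<integral>\<^sup>+z. ennreal K * (\<integral>\<^sup>+y'. \<integral>\<^sup>+z'. indicator (cball y r) y' * indicator (cball z r) z' * Psi r y' z' \<partial>nu2 \<partial>nu1) \<partial>nu2 \<partial>nu1)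
      = (\<integral>\<^sup>+y. ennreal K * (\<integral>\<^sup>+z. (\<integral>\<^sup>+y'. \<integral>\<^sup>+z'. indicator (cball y r) y' * indicator (cball z r) z' * Psi r y' z' \<partial>nu2 \<partial>nu1) \<partial>nu2) \<partial>nu1)"
      by (intro nn_integral_cong nn_integral_cmult) measurable
    also have "\<dots> = ennreal K * (\<integral>\<^sup>+y. (\<integral>\<^sup>+z. (\<integral>\<^sup>+y'. \<integral>\<^sup>+z'. indicator (cball y r) y' * indicator (cball z r) z' * Psi r y' z' \<partial>nu2 \<partial>nu1) \<partial>nu2) \<partial>nu1)"
      by (rule nn_integral_cmult) measurable
    finally show ?thesis by simp
  qed
  also have "\<dots> = ennreal K * (\<integral>\<^sup>+y'. (\<integral>\<^sup>+z'. Psi r (fst (y', z')) (snd (y', z')) * cj.V z' r \<partial>nu2) * ci.V y' r \<partial>nu1)"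
    by (subst swap4[OF Q]) rule
  also have "\<dots> \<le> ennreal K * (\<integral>\<^sup>+y'. (\<integral>\<^sup>+z'. Psi r y' z' * ennreal (b2 * ci.m z' r * r2) \<partial>nu2) * ennreal (b1 * ci.m y' r * r1) \<partial>nu1)"
  proof (intro mult_left_mono nn_integral_mono_AE)
    show "AE y' in nu1. (\<integral>\<^sup>+z'. Psi r (fst (y', z')) (snd (y', z')) * cj.V z' r \<partial>nu2) * ci.V y' r
       \<le> (\<integral>\<^sup>+z'. Psi r y' z' * ennreal (b2 * ci.m z' r * r2) \<partial>nu2) * ennreal (b1 * ci.m y' r * r1)"
      using ci.AE_S
    proof eventually_elim
      case (elim y')
      show ?case
      proof (intro mult_mono nn_integral_mono_AE)
        show "AE z' in nu2. Psi r (fst (y', z')) (snd (y', z')) * cj.V z' r \<le> Psi r y' z' * ennreal (b2 * ci.m z' r * r2)"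
          using cj.AE_S
        proof eventually_elim
          case (elim z')
          show ?case using cj.V_le[OF elim r] unfolding r2_def by (auto intro: mult_left_mono)
        qed
        show "ci.V y' r \<le> ennreal (b1 * ci.m y' r * r1)" using ci.V_le[OF elim r] unfolding r1_def by simp
      qed auto
    qed
  qed simp
  also have "\<dots> = ennreal (Cd^3/(a1*a2) * b1 * b2) *
     (\<integral>\<^sup>+y'. \<integral>\<^sup>+z'. ennreal (if dist y' z' \<le> 3*r then 1 / sqrt (ci.m y' r * ci.m z' r) else 0) * G y' z' \<partial>nu2 \<partial>nu1)"
  proof -
    define C where "C = Cd^3/(a1*a2) * b1 * b2"
    have C0: "0 \<le> C" unfolding C_def using ci.k1 cj.k1 ci.k2 cj.k2 ci.Cd by auto
    have pw: "ennreal K * (Psi r y' z' * ennreal (b2 * ci.m z' r * r2) * ennreal (b1 * ci.m y' r * r1))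
       = ennreal C * (ennreal (if dist y' z' \<le> 3*r then 1 / sqrt (ci.m y' r * ci.m z' r) else 0) * G y' z')" for y' z'
    proof (cases "dist y' z' \<le> 3*r")
      case True
      define my where "my = ci.m y' r"
      define mz where "mz = ci.m z' r"
      have my: "0 < my" "0 < mz" unfolding my_def mz_def using ci.m_pos r by auto
      have real: "K * (1/(sqrt (my * mz) * (my * mz))) * (b2 * mz * r2) * (b1 * my * r1) = C * (1 / sqrt (my * mz))"
        unfolding K_def C_def using my r12 ci.k1 cj.k1 by (simp add: field_simps)
      have nn: "0 \<le> 1/(sqrt (my * mz) * (my * mz))" "0 \<le> b2 * mz * r2" "0 \<le> b1 * my * r1" "0 \<le> 1 / sqrt (my * mz)"
        using my r12 ci.k2 cj.k2 by auto
      have Psi_eq: "Psi r y' z' = ennreal (1/(sqrt (my * mz) * (my * mz))) * G y' z'"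
        using True by (simp add: Psi_def my_def mz_def)
      have e: "ennreal (K * (1/(sqrt (my * mz) * (my * mz))) * (b2 * mz * r2) * (b1 * my * r1))
         = ennreal K * ennreal (1/(sqrt (my * mz) * (my * mz))) * ennreal (b2 * mz * r2) * ennreal (b1 * my * r1)"
        by (simp only: ennreal_mult'' nn)
      have e2: "ennreal (C * (1 / sqrt (my * mz))) = ennreal C * ennreal (1 / sqrt (my * mz))"
        by (simp only: ennreal_mult'' nn)
      have "ennreal K * (Psi r y' z' * ennreal (b2 * ci.m z' r * r2) * ennreal (b1 * ci.m y' r * r1))
         = ennreal (K * (1/(sqrt (my * mz) * (my * mz))) * (b2 * mz * r2) * (b1 * my * r1)) * G y' z'"
        unfolding Psi_eq e my_def[symmetric] mz_def[symmetric] by (simp only: mult_ac)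
      also have "\<dots> = ennreal C * (ennreal (if dist y' z' \<le> 3*r then 1 / sqrt (ci.m y' r * ci.m z' r) else 0) * G y' z')"
        unfolding real e2 my_def[symmetric] mz_def[symmetric] using True by (simp only: if_True mult_ac)
      finally show ?thesis .
    qed (simp add: Psi_def)
    have "ennreal K * (\<integral>\<^sup>+y'. (\<integral>\<^sup>+z'. Psi r y' z' * ennreal (b2 * ci.m z' r * r2) \<partial>nu2) * ennreal (b1 * ci.m y' r * r1) \<partial>nu1)
       = (\<integral>\<^sup>+y'. ennreal K * ((\<integral>\<^sup>+z'. Psi r y' z' * ennreal (b2 * ci.m z' r * r2) \<partial>nu2) * ennreal (b1 * ci.m y' r * r1)) \<partial>nu1)"
      by (rule nn_integral_cmult[symmetric]) measurable
    also have "\<dots> = (\<integral>\<^sup>+y'. \<integral>\<^sup>+z'. ennreal K * (Psi r y' z' * ennreal (b2 * ci.m z' r * r2) * ennreal (b1 * ci.m y' r * r1)) \<partial>nu2 \<partial>nu1)"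
      by (intro nn_integral_cong) (simp add: nn_integral_cmult nn_integral_multc)
    also have "\<dots> = (\<integral>\<^sup>+y'. \<integral>\<^sup>+z'. ennreal C * (ennreal (if dist y' z' \<le> 3*r then 1 / sqrt (ci.m y' r * ci.m z' r) else 0) * G y' z') \<partial>nu2 \<partial>nu1)"
      by (simp only: pw)
    also have "\<dots> = ennreal C * (\<integral>\<^sup>+y'. \<integral>\<^sup>+z'. ennreal (if dist y' z' \<le> 3*r then 1 / sqrt (ci.m y' r * ci.m z' r) else 0) * G y' z' \<partial>nu2 \<partial>nu1)"
      by (simp add: nn_integral_cmult)
    finally show ?thesis unfolding C_def .
  qed
  finally show ?thesis .
qed


definition F :: "'a \<Rightarrow> ennreal" where "F x = ennreal (\<bar>f x\<bar> powr p)"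

lemma F_meas[measurable]: "F \<in> borel_measurable borel"
  unfolding F_def by measurable

lemma P0:
  assumes r: "0 < r" "r \<le> 1" and y: "y \<in> S1" and z: "z \<in> S2"
  shows "epowr (A r y z) p \<le> Av (Hmeas M th1) (cball y r \<inter> S1) (\<lambda>y'. Av (Hmeas M th2) (cball z r \<inter> S2) (\<lambda>z'. G y' z'))"
proof -
  have [measurable_cong]: "sets (Hmeas M th1) = sets borel" "sets (Hmeas M th2) = sets borel"
    by (rule sets_Hmeas)+
  obtain v2 where v2: "cj.V z r = ennreal v2" "0 < v2"
    using cj.V_pos[OF ND2 z r] cj.V_fin[OF z r] by (cases "cj.V z r") auto
  define h where "h y' = Av (Hmeas M th2) (cball z r \<inter> S2) (\<lambda>z'. ennreal \<bar>f y' - f z'\<bar>)" for y'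
  have h_eq: "h y' = (\<integral>\<^sup>+z'. indicator (cball z r) z' * ennreal \<bar>f y' - f z'\<bar> \<partial>nu2) * ennreal (1/v2)" for y'
    unfolding h_def by (subst cj.Av_conv) (auto simp: v2 div_ennreal)
  have h_meas: "h \<in> borel_measurable borel"
    unfolding h_eq[abs_def] by measurable
  have em1: "emeasure (Hmeas M th1) (cball y r \<inter> S1) = ci.V y r"
    using ci.emeasure_nu[of "cball y r"] by (simp add: ci.V_def)
  have em2: "emeasure (Hmeas M th2) (cball z r \<inter> S2) = cj.V z r"
    using cj.emeasure_nu[of "cball z r"] by (simp add: cj.V_def)
  have "epowr (A r y z) p \<le> Av (Hmeas M th1) (cball y r \<inter> S1) (\<lambda>y'. epowr (h y') p)"
    unfolding A_def h_def[symmetric]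
    by (rule jensen_av) (use p em1 ci.V_fin[OF y r] h_meas in \<open>auto simp: measurable_cong_sets[OF sets_Hmeas refl]\<close>)
  also have "\<dots> \<le> Av (Hmeas M th1) (cball y r \<inter> S1) (\<lambda>y'. Av (Hmeas M th2) (cball z r \<inter> S2) (\<lambda>z'. G y' z'))"
  proof (rule Av_mono)
    fix y'
    have "epowr (h y') p \<le> Av (Hmeas M th2) (cball z r \<inter> S2) (\<lambda>z'. epowr (ennreal \<bar>f y' - f z'\<bar>) p)"
      unfolding h_def by (rule jensen_av) (use p em2 v2 in auto)
    then show "epowr (h y') p \<le> Av (Hmeas M th2) (cball z r \<inter> S2) (\<lambda>z'. G y' z')"
      by (simp add: epowr_ennreal G_def)
  qed
  finally show ?thesis .
qed

lemma P3pt: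
  assumes r: "0 < r" "r \<le> 1" and y: "y \<in> S1" and z: "z \<in> S2"
  shows "epowr (A r y z) p \<le> ennreal (2 powr p) *
     (Av (Hmeas M th2) (cball z r \<inter> S2) F + Av (Hmeas M th1) (cball y r \<inter> S1) F)"
proof -
  have [measurable_cong]: "sets (Hmeas M th1) = sets borel" "sets (Hmeas M th2) = sets borel"
    by (rule sets_Hmeas)+
  have em1: "emeasure (Hmeas M th1) (cball y r \<inter> S1) = ci.V y r"
    using ci.emeasure_nu[of "cball y r"] by (simp add: ci.V_def)
  have em2: "emeasure (Hmeas M th2) (cball z r \<inter> S2) = cj.V z r"
    using cj.emeasure_nu[of "cball z r"] by (simp add: cj.V_def)
  have "epowr (A r y z) p \<le> Av (Hmeas M th1) (cball y r \<inter> S1) (\<lambda>y'. Av (Hmeas M th2) (cball z r \<inter> S2) (\<lambda>z'. G y' z'))"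
    by (rule P0[OF r y z])
  also have "\<dots> \<le> Av (Hmeas M th1) (cball y r \<inter> S1) (\<lambda>y'. Av (Hmeas M th2) (cball z r \<inter> S2) (\<lambda>z'. ennreal (2 powr p) * (F y' + F z')))"
  proof (intro Av_mono)
    fix y' z'
    show "G y' z' \<le> ennreal (2 powr p) * (F y' + F z')"
      using powr_diff_le[of p "f y'" "f z'"] p unfolding G_def F_def
      by (simp add: ennreal_mult[symmetric] ennreal_plus[symmetric] ennreal_leI del: ennreal_plus)
  qed
  also have "\<dots> = Av (Hmeas M th1) (cball y r \<inter> S1) (\<lambda>y'. ennreal (2 powr p) * (Av (Hmeas M th2) (cball z r \<inter> S2) F + F y'))"
  proof -
    have "Av (Hmeas M th2) (cball z r \<inter> S2) (\<lambda>z'. ennreal (2 powr p) * (F y' + F z')) = ennreal (2 powr p) * (F y' + Av (Hmeas M th2) (cball z r \<inter> S2) F)" for y'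
      by (rule Av_lin) (use em2 cj.V_pos[OF ND2 z r] cj.V_fin[OF z r] in auto)
    then show ?thesis by (simp add: add.commute)
  qed
  also have "\<dots> = ennreal (2 powr p) * (Av (Hmeas M th2) (cball z r \<inter> S2) F + Av (Hmeas M th1) (cball y r \<inter> S1) F)"
    by (rule Av_lin) (use em1 ci.V_pos[OF ND1 y r] ci.V_fin[OF y r] in auto)
  finally show ?thesis .
qed


lemma L3:
  assumes r: "0 < r" "r \<le> 1/2"
  shows "(\<integral>\<^sup>+y. \<integral>\<^sup>+z. (if dist y z \<le> r then ennreal ((ci.m y r * ci.m z r) powr (-1/2)) * epowr (A r y z) p else 0) \<partial>nu2 \<partial>nu1)
   \<le> ennreal (2 powr p) * (ennreal (Cd / (a1 * r powr (-th1)) * (b2 * Cd^2 * (2*r) powr (-th2)) * (b1 * r powr (-th1))) * (\<integral>\<^sup>+y. F y \<partial>nu1)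
        + ennreal (Cd / (a2 * r powr (-th2)) * (b1 * Cd^2 * (2*r) powr (-th1)) * (b2 * r powr (-th2))) * (\<integral>\<^sup>+z. F z \<partial>nu2))"
proof -
  interpret pair_sigma_finite nu1 nu2
    by (simp add: pair_sigma_finite_def ci.sigma_finite_nu cj.sigma_finite_nu)
  have r1: "r \<le> 1" using r by simp
  define w where "w y z = ennreal ((ci.m y r * ci.m z r) powr (-1/2))" for y z
  define K1 where "K1 = Cd / (a1 * r powr (-th1))"
  define K2 where "K2 = Cd / (a2 * r powr (-th2))"
  define cW1 where "cW1 = b1 * Cd^2 * (2*r) powr (-th1)"
  define cW2 where "cW2 = b2 * Cd^2 * (2*r) powr (-th2)"
  have K0: "0 \<le> K1" "0 \<le> K2" "0 \<le> cW1" "0 \<le> cW2"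
    unfolding K1_def K2_def cW1_def cW2_def using ci.Cd ci.k1 cj.k1 ci.k2 cj.k2 by auto
  define Bm1 where "Bm1 y = (\<integral>\<^sup>+y'. indicator (cball y r) y' * F y' * ennreal (1 / ci.m y' r) \<partial>nu1)" for y
  define Bm2 where "Bm2 z = (\<integral>\<^sup>+z'. indicator (cball z r) z' * F z' * ennreal (1 / ci.m z' r) \<partial>nu2)" for z
  have w_meas[measurable]: "(\<lambda>(y, z). w y z) \<in> borel_measurable (borel \<Otimes>\<^sub>M borel)" unfolding w_def by measurable
  have Bm1_meas[measurable]: "Bm1 \<in> borel_measurable borel" unfolding Bm1_def by measurable
  have Bm2_meas[measurable]: "Bm2 \<in> borel_measurable borel" unfolding Bm2_def by measurable
  define X where "X y z = indicator (cball y r) z * w y z * (ennreal K2 * Bm2 z)" for y z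
  define Y where "Y y z = indicator (cball y r) z * w y z * (ennreal K1 * Bm1 y)" for y z
  have X_meas[measurable]: "(\<lambda>(y, z). X y z) \<in> borel_measurable (borel \<Otimes>\<^sub>M borel)" unfolding X_def by measurable
  have Y_meas[measurable]: "(\<lambda>(y, z). Y y z) \<in> borel_measurable (borel \<Otimes>\<^sub>M borel)" unfolding Y_def by measurable
  have step1: "(\<integral>\<^sup>+y. \<integral>\<^sup>+z. (if dist y z \<le> r then w y z * epowr (A r y z) p else 0) \<partial>nu2 \<partial>nu1)
     \<le> (\<integral>\<^sup>+y. \<integral>\<^sup>+z. ennreal (2 powr p) * (X y z + Y y z) \<partial>nu2 \<partial>nu1)"
  proof (rule nn_integral_mono_AE)
    show "AE y in nu1. (\<integral>\<^sup>+z. (if dist y z \<le> r then w y z * epowr (A r y z) p else 0) \<partial>nu2)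
       \<le> (\<integral>\<^sup>+z. ennreal (2 powr p) * (X y z + Y y z) \<partial>nu2)"
      using ci.AE_S
    proof eventually_elim
      case (elim y)
      show ?case
      proof (rule nn_integral_mono_AE)
        show "AE z in nu2. (if dist y z \<le> r then w y z * epowr (A r y z) p else 0) \<le> ennreal (2 powr p) * (X y z + Y y z)"
          using cj.AE_S
        proof eventually_elim
          case (elim z)
          show ?case
          proof (cases "dist y z \<le> r")
            case True
            have "w y z * epowr (A r y z) p \<le> w y z * (ennreal (2 powr p) *
               (Av (Hmeas M th2) (cball z r \<inter> S2) F + Av (Hmeas M th1) (cball y r \<inter> S1) F))"
              by (intro mult_left_mono P3pt) (use r1 r \<open>y \<in> S1\<close> elim in auto)
            also have "\<dots> \<le> w y z * (ennreal (2 powr p) * (ennreal K2 * Bm2 z + ennreal K1 * Bm1 y))"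
              unfolding K1_def K2_def Bm1_def Bm2_def
              by (intro mult_left_mono add_mono ci.Av_F_bound cj.Av_F_bound ND1 ND2) (use r1 r \<open>y \<in> S1\<close> elim in auto)
            also have "\<dots> = ennreal (2 powr p) * (X y z + Y y z)"
              using True unfolding X_def Y_def by (simp add: dist_commute distrib_left mult_ac)
            finally show ?thesis using True by (simp add: w_def)
          qed simp
        qed
      qed
    qed
  qed
  have step2: "(\<integral>\<^sup>+y. \<integral>\<^sup>+z. ennreal (2 powr p) * (X y z + Y y z) \<partial>nu2 \<partial>nu1)
     = ennreal (2 powr p) * ((\<integral>\<^sup>+y. \<integral>\<^sup>+z. X y z \<partial>nu2 \<partial>nu1) + (\<integral>\<^sup>+y. \<integral>\<^sup>+z. Y y z \<partial>nu2 \<partial>nu1))"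
  proof -
    have "(\<integral>\<^sup>+y. \<integral>\<^sup>+z. ennreal (2 powr p) * (X y z + Y y z) \<partial>nu2 \<partial>nu1)
      = (\<integral>\<^sup>+y. ennreal (2 powr p) * ((\<integral>\<^sup>+z. X y z \<partial>nu2) + (\<integral>\<^sup>+z. Y y z \<partial>nu2)) \<partial>nu1)"
      by (intro nn_integral_cong) (simp add: nn_integral_cmult nn_integral_add)
    also have "\<dots> = ennreal (2 powr p) * ((\<integral>\<^sup>+y. \<integral>\<^sup>+z. X y z \<partial>nu2 \<partial>nu1) + (\<integral>\<^sup>+y. \<integral>\<^sup>+z. Y y z \<partial>nu2 \<partial>nu1))"
      by (simp add: nn_integral_cmult nn_integral_add)
    finally show ?thesis .
  qed
  have stepY: "(\<integral>\<^sup>+y. \<integral>\<^sup>+z. Y y z \<partial>nu2 \<partial>nu1) \<le> ennreal (K1 * cW2 * (b1 * r powr (-th1))) * (\<integral>\<^sup>+y. F y \<partial>nu1)"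
  proof -
    have "(\<integral>\<^sup>+y. \<integral>\<^sup>+z. Y y z \<partial>nu2 \<partial>nu1) = (\<integral>\<^sup>+y. (\<integral>\<^sup>+z. indicator (cball y r) z * w y z \<partial>nu2) * (ennreal K1 * Bm1 y) \<partial>nu1)"
      unfolding Y_def by (intro nn_integral_cong nn_integral_multc) measurable
    also have "\<dots> \<le> (\<integral>\<^sup>+y. ennreal cW2 * (ennreal K1 * Bm1 y) \<partial>nu1)"
      by (intro nn_integral_mono mult_right_mono) (use cj.W_bound[OF r] in \<open>simp_all add: w_def cW2_def\<close>)
    also have "\<dots> = ennreal cW2 * (ennreal K1 * (\<integral>\<^sup>+y. Bm1 y \<partial>nu1))"
      by (simp add: nn_integral_cmult)
    also have "\<dots> \<le> ennreal cW2 * (ennreal K1 * (ennreal (b1 * r powr (-th1)) * (\<integral>\<^sup>+y. F y \<partial>nu1)))"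
      using ci.Bm_int[OF F_meas r(1) r1] by (intro mult_left_mono) (simp_all add: Bm1_def mult.assoc)
    also have "\<dots> = ennreal (K1 * cW2 * (b1 * r powr (-th1))) * (\<integral>\<^sup>+y. F y \<partial>nu1)"
      using K0 ci.k2 by (simp add: ennreal_mult mult_ac)
    finally show ?thesis .
  qed
  have stepX: "(\<integral>\<^sup>+y. \<integral>\<^sup>+z. X y z \<partial>nu2 \<partial>nu1) \<le> ennreal (K2 * cW1 * (b2 * r powr (-th2))) * (\<integral>\<^sup>+z. F z \<partial>nu2)"
  proof -
    have "(\<integral>\<^sup>+y. \<integral>\<^sup>+z. X y z \<partial>nu2 \<partial>nu1) = (\<integral>\<^sup>+z. \<integral>\<^sup>+y. X y z \<partial>nu1 \<partial>nu2)"
      by (rule Fubini'[symmetric]) measurable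
    also have "\<dots> = (\<integral>\<^sup>+z. (\<integral>\<^sup>+y. indicator (cball z r) y * ennreal ((ci.m z r * ci.m y r) powr (-1/2)) \<partial>nu1) * (ennreal K2 * Bm2 z) \<partial>nu2)"
    proof (intro nn_integral_cong)
      fix z
      have "(\<integral>\<^sup>+y. X y z \<partial>nu1) = (\<integral>\<^sup>+y. indicator (cball z r) y * ennreal ((ci.m z r * ci.m y r) powr (-1/2)) * (ennreal K2 * Bm2 z) \<partial>nu1)"
        unfolding X_def w_def by (intro nn_integral_cong) (simp add: indicator_def dist_commute mult.commute)
      also have "\<dots> = (\<integral>\<^sup>+y. indicator (cball z r) y * ennreal ((ci.m z r * ci.m y r) powr (-1/2)) \<partial>nu1) * (ennreal K2 * Bm2 z)"
        by (rule nn_integral_multc) measurable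
      finally show "(\<integral>\<^sup>+y. X y z \<partial>nu1) = (\<integral>\<^sup>+y. indicator (cball z r) y * ennreal ((ci.m z r * ci.m y r) powr (-1/2)) \<partial>nu1) * (ennreal K2 * Bm2 z)" .
    qed
    also have "\<dots> \<le> (\<integral>\<^sup>+z. ennreal cW1 * (ennreal K2 * Bm2 z) \<partial>nu2)"
      by (intro nn_integral_mono mult_right_mono) (use ci.W_bound[OF r] in \<open>simp_all add: cW1_def\<close>)
    also have "\<dots> = ennreal cW1 * (ennreal K2 * (\<integral>\<^sup>+z. Bm2 z \<partial>nu2))"
      by (simp add: nn_integral_cmult)
    also have "\<dots> \<le> ennreal cW1 * (ennreal K2 * (ennreal (b2 * r powr (-th2)) * (\<integral>\<^sup>+z. F z \<partial>nu2)))"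
      using cj.Bm_int[OF F_meas r(1) r1] by (intro mult_left_mono) (simp_all add: Bm2_def mult.assoc)
    also have "\<dots> = ennreal (K2 * cW1 * (b2 * r powr (-th2))) * (\<integral>\<^sup>+z. F z \<partial>nu2)"
      using K0 cj.k2 by (simp add: ennreal_mult mult_ac)
    finally show ?thesis .
  qed
  have "(\<integral>\<^sup>+y. \<integral>\<^sup>+z. (if dist y z \<le> r then w y z * epowr (A r y z) p else 0) \<partial>nu2 \<partial>nu1)
     \<le> ennreal (2 powr p) * (ennreal (K1 * cW2 * (b1 * r powr (-th1))) * (\<integral>\<^sup>+y. F y \<partial>nu1)
        + ennreal (K2 * cW1 * (b2 * r powr (-th2))) * (\<integral>\<^sup>+z. F z \<partial>nu2))"
  proof -
    have "(\<integral>\<^sup>+y. \<integral>\<^sup>+z. X y z \<partial>nu2 \<partial>nu1) + (\<integral>\<^sup>+y. \<integral>\<^sup>+z. Y y z \<partial>nu2 \<partial>nu1)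
      \<le> ennreal (K1 * cW2 * (b1 * r powr (-th1))) * (\<integral>\<^sup>+y. F y \<partial>nu1)
        + ennreal (K2 * cW1 * (b2 * r powr (-th2))) * (\<integral>\<^sup>+z. F z \<partial>nu2)"
      using add_mono[OF stepX stepY] by (simp add: add.commute)
    then show ?thesis using step1 unfolding step2 by (meson mult_left_mono order_trans zero_le)
  qed
  then show ?thesis unfolding w_def K1_def K2_def cW1_def cW2_def .
qed

end



lemma pow2_shift: "4 * 2 powr (- real (Suc (Suc (Suc j)))) = (2::real) powr (- real (Suc j))"
proof -
  have "(2::real) powr (- real (Suc j)) = 2 powr (2 + (- real (Suc (Suc (Suc j)))))" by simp
  also have "\<dots> = 2 powr 2 * 2 powr (- real (Suc (Suc (Suc j))))" by (rule powr_add)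
  also have "(2::real) powr 2 = 4" by simp
  finally show ?thesis by simp
qed

context pairc begin

lemma L2pt:
  assumes r: "0 < r" "r \<le> 2"
  shows "ennreal (if dist y z \<le> 3*r then 1 / sqrt (ci.m y r * ci.m z r) else 0) * G y z
    \<le> ennreal (Cd^2) * (if dist y z \<le> 4*r then ennreal ((ci.m y (4*r) * ci.m z (4*r)) powr (-1/2)) * G y z else 0)"
proof (cases "dist y z \<le> 3*r")
  case True
  define P where "P = ci.m y r * ci.m z r"
  define P4 where "P4 = ci.m y (4*r) * ci.m z (4*r)"
  have Pp: "0 < P" "0 < P4" unfolding P_def P4_def using ci.m_pos r by auto
  have "P4 \<le> (Cd^2 * ci.m y r) * (Cd^2 * ci.m z r)"
    unfolding P4_def using r ci.m_pos[of "4*r"] ci.m_nonneg ci.Cd by (intro mult_mono ci.m_dbl2) auto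
  then have P4le: "P4 \<le> Cd^4 * P" unfolding P_def by (simp add: power2_eq_square power4_eq_xxxx mult_ac)
  have Cdp: "0 < Cd" using ci.Cd by simp
  have "1 / sqrt P = Cd^2 * (1 / sqrt (Cd^4 * P))"
    using Pp Cdp by (simp add: real_sqrt_mult power4_eq_xxxx real_sqrt_mult_self field_simps power2_eq_square)
  also have "\<dots> \<le> Cd^2 * (1 / sqrt P4)"
    using Pp Cdp P4le by (intro mult_left_mono divide_left_mono real_sqrt_le_mono) auto
  also have "\<dots> = Cd^2 * P4 powr (-1/2)" using powr_neg_half[OF Pp(2)] by simp
  finally have key: "1 / sqrt P \<le> Cd^2 * P4 powr (-1/2)" .
  have "ennreal (1 / sqrt P) * G y z \<le> ennreal (Cd^2 * P4 powr (-1/2)) * G y z"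
    using key by (intro mult_right_mono ennreal_leI) auto
  then show ?thesis using True r Cdp unfolding P_def P4_def
    by (simp add: ennreal_mult mult_ac)
qed simp


definition rk :: "nat \<Rightarrow> real" where "rk k = 2 powr - real k"

definition I3 :: "nat \<Rightarrow> ennreal" where
  "I3 k = (\<integral>\<^sup>+y. \<integral>\<^sup>+z. (if dist y z \<le> rk k then ennreal ((ci.m y (rk k) * ci.m z (rk k)) powr (-1/2)) * epowr (A (rk k) y z) p else 0) \<partial>nu2 \<partial>nu1)"

definition I1 :: "nat \<Rightarrow> ennreal" where
  "I1 k = (\<integral>\<^sup>+y. \<integral>\<^sup>+z. (if dist y z \<le> rk k then ennreal ((ci.m y (rk k) * ci.m z (rk k)) powr (-1/2)) * G y z else 0) \<partial>nu2 \<partial>nu1)"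

definition ee :: "nat \<Rightarrow> real" where "ee k = 2 powr (real k * (p - th1 - th2))"

lemma rk_pos: "0 < rk k" unfolding rk_def by simp

lemma rk_Suc: "rk (Suc k) \<le> 1/2"
proof -
  have "rk (Suc k) \<le> 2 powr (-1)" unfolding rk_def by (intro powr_mono) auto
  then show ?thesis by (simp add: powr_minus)
qed

lemma I3_large: "I3 (Suc (Suc (Suc j))) \<le> ennreal (Cd^3/(a1*a2) * b1 * b2 * Cd^2) * I1 (Suc j)"
proof -
  define r where "r = rk (Suc (Suc (Suc j)))"
  have r: "0 < r" "r \<le> 1" "r \<le> 2" using rk_pos[of "Suc (Suc (Suc j))"] rk_Suc[of "Suc (Suc j)"] unfolding r_def by auto
  have r4: "4 * r = rk (Suc j)" unfolding r_def rk_def by (rule pow2_shift)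
  have c0: "0 \<le> Cd^3/(a1*a2) * b1 * b2" using ci.Cd ci.k1 cj.k1 ci.k2 cj.k2 by auto
  have "I3 (Suc (Suc (Suc j))) \<le> ennreal (Cd^3/(a1*a2) * b1 * b2) *
     (\<integral>\<^sup>+y'. \<integral>\<^sup>+z'. ennreal (if dist y' z' \<le> 3*r then 1 / sqrt (ci.m y' r * ci.m z' r) else 0) * G y' z' \<partial>nu2 \<partial>nu1)"
    unfolding I3_def r_def[symmetric] by (rule L1[OF r(1,2)])
  also have "\<dots> \<le> ennreal (Cd^3/(a1*a2) * b1 * b2) *
     (\<integral>\<^sup>+y'. \<integral>\<^sup>+z'. ennreal (Cd^2) * (if dist y' z' \<le> 4*r then ennreal ((ci.m y' (4*r) * ci.m z' (4*r)) powr (-1/2)) * G y' z' else 0) \<partial>nu2 \<partial>nu1)"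
    by (intro mult_left_mono nn_integral_mono L2pt r) auto
  also have "\<dots> = ennreal (Cd^3/(a1*a2) * b1 * b2) * (ennreal (Cd^2) * I1 (Suc j))"
    unfolding I1_def r4[symmetric] by (simp add: nn_integral_cmult)
  also have "\<dots> = ennreal (Cd^3/(a1*a2) * b1 * b2 * Cd^2) * I1 (Suc j)"
    by (subst ennreal_mult''[OF zero_le_power2]) (simp only: mult_ac)
  finally show ?thesis .
qed

definition Dsm :: "nat \<Rightarrow> real" where
  "Dsm k = 2 powr p * (Cd / (a1 * rk (Suc k) powr (-th1)) * (b2 * Cd^2 * (2 * rk (Suc k)) powr (-th2)) * (b1 * rk (Suc k) powr (-th1))
     + Cd / (a2 * rk (Suc k) powr (-th2)) * (b1 * Cd^2 * (2 * rk (Suc k)) powr (-th1)) * (b2 * rk (Suc k) powr (-th2)))"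

lemma I3_small: "0 \<le> Dsm k \<and> I3 (Suc k) \<le> ennreal (Dsm k) * ((\<integral>\<^sup>+y. F y \<partial>nu1) + (\<integral>\<^sup>+z. F z \<partial>nu2))"
proof -
  define r where "r = rk (Suc k)"
  have r: "0 < r" "r \<le> 1/2" using rk_pos rk_Suc unfolding r_def by auto
  define CX where "CX = Cd / (a1 * r powr (-th1)) * (b2 * Cd^2 * (2*r) powr (-th2)) * (b1 * r powr (-th1))"
  define CY where "CY = Cd / (a2 * r powr (-th2)) * (b1 * Cd^2 * (2*r) powr (-th1)) * (b2 * r powr (-th2))"
  have Dsm: "Dsm k = 2 powr p * (CX + CY)" unfolding Dsm_def CX_def CY_def r_def ..
  have C0: "0 \<le> CX" "0 \<le> CY" unfolding CX_def CY_def using ci.Cd ci.k1 cj.k1 ci.k2 cj.k2 r by auto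
  have "I3 (Suc k) \<le> ennreal (2 powr p) * (ennreal CX * (\<integral>\<^sup>+y. F y \<partial>nu1) + ennreal CY * (\<integral>\<^sup>+z. F z \<partial>nu2))"
    unfolding I3_def r_def[symmetric] CX_def CY_def by (rule L3[OF r])
  also have "\<dots> \<le> ennreal (2 powr p) * (ennreal (CX + CY) * (\<integral>\<^sup>+y. F y \<partial>nu1) + ennreal (CX + CY) * (\<integral>\<^sup>+z. F z \<partial>nu2))"
    using C0 by (intro mult_left_mono add_mono mult_right_mono ennreal_leI) auto
  also have "\<dots> = ennreal (2 powr p * (CX + CY)) * ((\<integral>\<^sup>+y. F y \<partial>nu1) + (\<integral>\<^sup>+z. F z \<partial>nu2))"
    using C0 by (simp add: ennreal_mult distrib_left mult_ac)
  finally show ?thesis using C0 unfolding Dsm by auto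
qed

definition Cpair :: real where
  "Cpair = 2 powr (2 * (p - th1 - th2)) * (Cd^3/(a1*a2) * b1 * b2 * Cd^2) + (ee 1 * Dsm 0 + ee 2 * Dsm 1)"

lemma pair_sum: "0 \<le> Cpair \<and> (\<Sum>k'. ennreal (ee (Suc k')) * I3 (Suc k'))
    \<le> ennreal Cpair * ((\<Sum>k'. ennreal (ee (Suc k')) * I1 (Suc k')) + (\<integral>\<^sup>+y. F y \<partial>nu1) + (\<integral>\<^sup>+z. F z \<partial>nu2))"
proof -
  define c where "c = 2 powr (2 * (p - th1 - th2)) * (Cd^3/(a1*a2) * b1 * b2 * Cd^2)"
  have c0: "0 \<le> c" unfolding c_def using ci.Cd ci.k1 cj.k1 ci.k2 cj.k2 by auto
  define D0 where "D0 = Dsm 0"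
  define D1 where "D1 = Dsm 1"
  have D0: "0 \<le> D0" "I3 (Suc 0) \<le> ennreal D0 * ((\<integral>\<^sup>+y. F y \<partial>nu1) + (\<integral>\<^sup>+z. F z \<partial>nu2))"
    using I3_small[of 0] unfolding D0_def by auto
  have D1: "0 \<le> D1" "I3 (Suc 1) \<le> ennreal D1 * ((\<integral>\<^sup>+y. F y \<partial>nu1) + (\<integral>\<^sup>+z. F z \<partial>nu2))"
    using I3_small[of 1] unfolding D1_def by auto
  define T3 where "T3 k' = ennreal (ee (Suc k')) * I3 (Suc k')" for k'
  define T1 where "T1 k' = ennreal (ee (Suc k')) * I1 (Suc k')" for k'
  define L where "L = (\<integral>\<^sup>+y. F y \<partial>nu1) + (\<integral>\<^sup>+z. F z \<partial>nu2)"
  define d where "d = ee 1 * D0 + ee 2 * D1"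
  have Cp: "Cpair = c + d" unfolding Cpair_def c_def d_def D0_def D1_def ..
  have ee0: "0 \<le> ee k" for k unfolding ee_def by simp
  have d0: "0 \<le> d" unfolding d_def using ee0 D0 D1 by auto
  have big: "T3 (j + 2) \<le> ennreal c * T1 j" for j
  proof -
    have e: "ee (Suc (Suc (Suc j))) = 2 powr (2 * (p - th1 - th2)) * ee (Suc j)"
      unfolding ee_def by (simp add: powr_add[symmetric] algebra_simps)
    have "T3 (j + 2) = ennreal (ee (Suc (Suc (Suc j)))) * I3 (Suc (Suc (Suc j)))"
      unfolding T3_def by (simp add: eval_nat_numeral)
    also have "\<dots> \<le> ennreal (ee (Suc (Suc (Suc j)))) * (ennreal (Cd^3/(a1*a2) * b1 * b2 * Cd^2) * I1 (Suc j))"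
      by (intro mult_left_mono I3_large) auto
    also have "\<dots> = ennreal c * T1 j"
    proof -
      define q where "q = 2 powr (2 * (p - th1 - th2))"
      define K where "K = Cd^3/(a1*a2) * b1 * b2 * Cd^2"
      have K0: "0 \<le> K" unfolding K_def using ci.Cd ci.k1 cj.k1 ci.k2 cj.k2 by auto
      have q0: "0 \<le> q" unfolding q_def by simp
      have "ennreal (q * ee (Suc j)) * (ennreal K * I1 (Suc j)) = ennreal (q * K) * (ennreal (ee (Suc j)) * I1 (Suc j))"
        by (simp only: ennreal_mult'' ee0 K0 q0 mult_ac)
      then show ?thesis unfolding T1_def c_def e q_def[symmetric] K_def[symmetric] by (simp add: mult.assoc)
    qed
    finally show ?thesis .
  qed
  have "(\<Sum>k'. T3 k') = (\<Sum>j. T3 (j + 2)) + (\<Sum>j<2. T3 j)"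
    by (rule suminf_offset) (rule summableI)
  also have "\<dots> \<le> ennreal c * (\<Sum>j. T1 j) + ennreal d * L"
  proof (rule add_mono)
    show "(\<Sum>j. T3 (j + 2)) \<le> ennreal c * (\<Sum>j. T1 j)"
      using big by (simp add: suminf_le summableI flip: ennreal_suminf_cmult)
    have "(\<Sum>j<2. T3 j) = T3 0 + T3 1" by (simp add: eval_nat_numeral)
    also have "\<dots> \<le> ennreal (ee 1) * (ennreal D0 * L) + ennreal (ee 2) * (ennreal D1 * L)"
      unfolding T3_def L_def using D0 D1 by (auto simp: eval_nat_numeral intro!: add_mono mult_left_mono)
    also have "\<dots> = ennreal d * L"
      unfolding d_def using ee0 D0 D1 by (simp add: ennreal_mult distrib_right distrib_left mult_ac ennreal_plus)
    finally show "(\<Sum>j<2. T3 j) \<le> ennreal d * L" .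
  qed
  also have "\<dots> \<le> ennreal (c + d) * ((\<Sum>j. T1 j) + L)"
    using c0 d0 by (simp add: distrib_left add_mono mult_right_mono ennreal_leI)
  finally show ?thesis unfolding T3_def T1_def L_def Cp using c0 d0
    by (simp add: add.assoc)
qed

end



lemma powr_add_le:
  fixes x y q :: real assumes "0 \<le> x" "0 \<le> y" "0 < q" "q \<le> 1"
  shows "(x + y) powr q \<le> x powr q + y powr q"
proof (cases "x + y = 0")
  case True then show ?thesis using assms by simp
next
  case False
  define s where "s = x + y"
  have s: "0 < s" using False assms unfolding s_def by simp
  have hx: "x / s \<le> (x / s) powr q"
  proof -
    have "(x/s) powr 1 \<le> (x/s) powr q" using assms s by (intro powr_mono') (auto simp: s_def)
    then show ?thesis using assms s by simp
  qed
  have hy: "y / s \<le> (y / s) powr q"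
  proof -
    have "(y/s) powr 1 \<le> (y/s) powr q" using assms s by (intro powr_mono') (auto simp: s_def)
    then show ?thesis using assms s by simp
  qed
  have "1 = x/s + y/s" using s unfolding s_def by (simp add: add_divide_distrib[symmetric])
  also have "\<dots> \<le> (x/s) powr q + (y/s) powr q" using hx hy by simp
  also have "\<dots> = (x powr q + y powr q) / s powr q" using assms s by (simp add: powr_divide add_divide_distrib)
  finally have "s powr q \<le> x powr q + y powr q" using s by (simp add: field_simps)
  then show ?thesis unfolding s_def .
qed

lemma epowr_add_le: assumes "0 < q" "q \<le> 1" shows "epowr (a + b) q \<le> epowr a q + epowr b q"
proof (cases a)
  case (real x)
  note ax = this
  show ?thesis
  proof (cases b)
    case (real y)
    then show ?thesis using ax assms powr_add_le[of x y q]
      by (simp add: epowr_ennreal ennreal_plus[symmetric] ennreal_leI del: ennreal_plus)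
  qed (simp add: epowr_def)
qed (simp add: epowr_def)

lemma epowr_sum_le: assumes "finite I" "0 < q" "q \<le> 1"
  shows "epowr (\<Sum>i\<in>I. a i) q \<le> (\<Sum>i\<in>I. epowr (a i) q)"
  using assms(1)
proof (induction I rule: finite_induct)
  case empty then show ?case using assms by simp
next
  case (insert x F)
  have "epowr (\<Sum>i\<in>insert x F. a i) q = epowr (a x + (\<Sum>i\<in>F. a i)) q" using insert by simp
  also have "\<dots> \<le> epowr (a x) q + epowr (\<Sum>i\<in>F. a i) q" by (rule epowr_add_le) (use assms in auto)
  also have "\<dots> \<le> epowr (a x) q + (\<Sum>i\<in>F. epowr (a i) q)" using insert by (intro add_left_mono)
  finally show ?case using insert by simp
qed

lemma epowr_cmult: assumes "0 \<le> c" "0 < q" shows "epowr (ennreal c * x) q = ennreal (c powr q) * epowr x q"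
proof (cases x)
  case (real t)
  then show ?thesis using assms by (simp add: epowr_ennreal ennreal_mult[symmetric] powr_mult)
next
  case top
  then show ?thesis using assms by (cases "c = 0") (auto simp: epowr_def ennreal_mult_top)
qed

lemma mms_exists:
  fixes M :: "'a::polish_space measure"
  assumes borel: "sets M = sets borel" and locfin: "locally_finite_msr M"
    and supp: "full_support M" and doubling: "unif_loc_doubling M"
  shows "\<exists>Cd. mms M Cd"
proof -
  obtain C where C: "\<And>r x. 0 < r \<Longrightarrow> r \<le> 8 \<Longrightarrow> emeasure M (cball x (2*r)) \<le> ennreal C * emeasure M (cball x r)"
    using doubling unfolding unif_loc_doubling_def by (metis zero_less_numeral)
  have fin: "emeasure M (cball x r) < \<infinity>" for x r
  proof -
    obtain e where e: "0 < e" "emeasure M (ball x e) < \<infinity>" using locfin unfolding locally_finite_msr_def by blast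
    have step: "emeasure M (cball x ((e/2) * 2^n)) < \<infinity>" for n
    proof (induction n)
      case 0
      have "emeasure M (cball x (e/2)) \<le> emeasure M (ball x e)"
        using e by (intro emeasure_mono) (auto simp: borel)
      then show ?case using e by simp
    next
      case (Suc n)
      define \<rho> where "\<rho> = (e/2) * 2^n"
      have \<rho>: "0 < \<rho>" using e unfolding \<rho>_def by simp
      obtain C' where C': "\<And>r x. 0 < r \<and> r \<le> \<rho> \<longrightarrow> emeasure M (cball x (2*r)) \<le> ennreal C' * emeasure M (cball x r)"
        using doubling \<rho> unfolding unif_loc_doubling_def by blast
      have "emeasure M (cball x (2*\<rho>)) \<le> ennreal C' * emeasure M (cball x \<rho>)" using C' \<rho> by blast
      also have "\<dots> < \<infinity>" using Suc unfolding \<rho>_def by (simp add: ennreal_mult_less_top)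
      finally show ?case unfolding \<rho>_def by (simp add: mult_ac)
    qed
    obtain n where n: "2*r/e < 2^n" using real_arch_pow[of 2 "2*r/e"] by auto
    have "r \<le> (e/2) * 2^n" using n e by (simp add: field_simps)
    then have "emeasure M (cball x r) \<le> emeasure M (cball x ((e/2) * 2^n))"
      by (intro emeasure_mono) (auto simp: borel)
    then show ?thesis using step[of n] by simp
  qed
  have pos: "0 < emeasure M (cball x r)" if "0 < r" for x r
  proof -
    have "0 < emeasure M (ball x r)" using supp that unfolding full_support_def by blast
    also have "\<dots> \<le> emeasure M (cball x r)" by (intro emeasure_mono) (auto simp: borel)
    finally show ?thesis .
  qed
  have "mms M (max C 1)"
  proof
    show "sets M = sets borel" by (rule borel)
    show "emeasure M (cball x r) < \<infinity>" for x r by (rule fin)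
    show "0 < emeasure M (cball x r)" if "0 < r" for x r using pos that .
    show "emeasure M (cball x (2*r)) \<le> ennreal (max C 1) * emeasure M (cball x r)" if "0 < r" "r \<le> 8" for x r
      using C[OF that, of x] by (rule order_trans) (intro mult_right_mono ennreal_leI, auto)
  qed auto
  then show ?thesis by blast
qed


theorem lemma3p10:
  fixes M :: "'a::polish_space measure"
    and p :: real and N :: nat and \<theta> :: "nat \<Rightarrow> real" and \<theta>bar :: real
    and S :: "nat \<Rightarrow> 'a set"
  assumes borel: "sets M = sets borel"
    and locfin: "locally_finite_msr M"
    and supp: "full_support M"
    and doubling: "unif_loc_doubling M"
    and p: "1 < p"
    and poincare: "weak_local_poincare p M"
    and thetabar: "0 \<le> \<theta>bar" "\<theta>bar < min p (Qlow M)"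
    and N: "N \<ge> 2"
    and theta_pos: "0 < \<theta> 1"
    and theta_mono: "\<forall>i j. 1 \<le> i \<and> i < j \<and> j \<le> N \<longrightarrow> \<theta> i < \<theta> j"
    and theta_N: "\<theta> N = \<theta>bar"
    and S_ADR: "\<forall>i\<in>{1..N}. closed (S i) \<and> ADR M (\<theta> i) (S i)"
  shows "\<exists>C::real. C > 0 \<and>
           (\<forall>f::'a \<Rightarrow> real. (\<forall>i\<in>{1..N}. inLp p (Hrestr M (\<theta> i) (S i)) f) \<longrightarrow>
              GL3 p M N \<theta> S f
                \<le> ennreal C * (GL1 p M N \<theta> S f + (\<Sum>i\<in>{1..N}. Lpnorm p (Hrestr M (\<theta> i) (S i)) f)))"
proof -
  obtain Cd where mms: "mms M Cd" using mms_exists[OF borel locfin supp doubling] by blast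
  have "\<forall>i\<in>{1..N}. \<exists>kk. comp M Cd (\<theta> i) (S i) (fst kk) (snd kk)"
  proof
    fix i assume i: "i \<in> {1..N}"
    then obtain k1 k2 where k: "closed (S i)" "0 < k1" "0 < k2"
      "\<forall>x\<in>S i. \<forall>r. 0 < r \<and> r \<le> 1 \<longrightarrow>
          ennreal k1 * emeasure M (cball x r) * ennreal (r powr (- \<theta> i)) \<le> Hth M (\<theta> i) (cball x r \<inter> S i) \<and>
          Hth M (\<theta> i) (cball x r \<inter> S i) \<le> ennreal k2 * emeasure M (cball x r) * ennreal (r powr (- \<theta> i))"
      using S_ADR unfolding ADR_def by blast
    then have "comp M Cd (\<theta> i) (S i) k1 k2"
      using mms by (auto simp: comp_def comp_axioms_def)
    then show "\<exists>kk. comp M Cd (\<theta> i) (S i) (fst kk) (snd kk)" by (intro exI[of _ "(k1, k2)"]) simp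
  qed
  then obtain KK where KK: "\<forall>i\<in>{1..N}. comp M Cd (\<theta> i) (S i) (fst (KK i)) (snd (KK i))"
    by (metis bchoice)
  define K1 where "K1 i = fst (KK i)" for i
  define K2 where "K2 i = snd (KK i)" for i
  have comp: "comp M Cd (\<theta> i) (S i) (K1 i) (K2 i)" if "i \<in> {1..N}" for i
    using KK that unfolding K1_def K2_def by blast
  define Cp where "Cp i j = max 0 (pairc.Cpair Cd (\<theta> i) (K1 i) (K2 i) (\<theta> j) (K1 j) (K2 j) p)" for i j
  define C0 where "C0 = (\<Sum>i\<in>{1..N}. \<Sum>j\<in>{1..N}. Cp i j)"
  define D where "D = C0 * (2 * real N + 1) + 1"
  have Cp0: "0 \<le> Cp i j" for i j unfolding Cp_def by simp
  have C0: "0 \<le> C0" unfolding C0_def using Cp0 by (simp add: sum_nonneg)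
  have Cp_le: "Cp i j \<le> C0" if "i \<in> {1..N}" "j \<in> {1..N}" for i j
  proof -
    have "Cp i j \<le> (\<Sum>j\<in>{1..N}. Cp i j)" using that Cp0 by (intro member_le_sum) auto
    also have "\<dots> \<le> C0" unfolding C0_def using that Cp0 by (intro member_le_sum[of i]) (auto simp: sum_nonneg)
    finally show ?thesis .
  qed
  have CN: "0 \<le> C0 * (2 * real N)" using C0 by simp
  have De: "D = C0 * (2 * real N) + C0 + 1" unfolding D_def by (simp add: algebra_simps)
  have D: "0 < D" "C0 \<le> D" "C0 * (2 * real N) \<le> D" unfolding De using C0 CN by linarith+
  show ?thesis
  proof (intro exI[of _ "D powr (1/p)"] conjI allI impI)
    show "0 < D powr (1/p)" using D by simp
    fix f :: "'a \<Rightarrow> real"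
    assume Lp: "\<forall>i\<in>{1..N}. inLp p (Hrestr M (\<theta> i) (S i)) f"
    have f: "f \<in> borel_measurable borel"
    proof -
      have "1 \<in> {1..N}" using N by simp
      then have "inLp p (Hrestr M (\<theta> 1) (S 1)) f" using Lp by blast
      then show ?thesis unfolding inLp_def by (simp add: measurable_cong_sets[OF sets_Hrestr refl])
    qed
    define L where "L i = (\<integral>\<^sup>+x. ennreal (\<bar>f x\<bar> powr p) \<partial>Hrestr M (\<theta> i) (S i))" for i
    define T3 where "T3 i j = (\<Sum>k'. let k = Suc k' in
           ennreal (2 powr (real k * (p - \<theta> i - \<theta> j))) *
           (\<integral>\<^sup>+y. (\<integral>\<^sup>+z. (if dist y z \<le> 2 powr - real k then wk M k y z * epowr (Aijk M \<theta> S i j k f y z) p else 0)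
                 \<partial>Hrestr M (\<theta> j) (S j)) \<partial>Hrestr M (\<theta> i) (S i)))" for i j
    define T1 where "T1 i j = (\<Sum>k'. let k = Suc k' in
           ennreal (2 powr (real k * (p - \<theta> i - \<theta> j))) *
           (\<integral>\<^sup>+y. (\<integral>\<^sup>+z. (if dist y z \<le> 2 powr - real k then wk M k y z * ennreal (\<bar>f y - f z\<bar> powr p) else 0)
                 \<partial>Hrestr M (\<theta> j) (S j)) \<partial>Hrestr M (\<theta> i) (S i)))" for i j
    have GL3: "GL3 p M N \<theta> S f = epowr (\<Sum>i\<in>{1..N}. \<Sum>j\<in>{1..N}. if i = j then 0 else T3 i j) (1/p)"
      unfolding GL3_def GLsum_def T3_def ..
    have GL1: "GL1 p M N \<theta> S f = epowr (\<Sum>i\<in>{1..N}. \<Sum>j\<in>{1..N}. if i = j then 0 else T1 i j) (1/p)"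
      unfolding GL1_def GLsum_def T1_def ..
    have LN: "Lpnorm p (Hrestr M (\<theta> i) (S i)) f = epowr (L i) (1/p)" for i
      unfolding Lpnorm_def L_def ..
    have pb: "T3 i j \<le> ennreal (Cp i j) * (T1 i j + L i + L j)" if i: "i \<in> {1..N}" and j: "j \<in> {1..N}" for i j
    proof (cases "comp.ND M (\<theta> i) \<and> comp.ND M (\<theta> j)")
      case True
      interpret pc: pairc M Cd "\<theta> i" "S i" "K1 i" "K2 i" "\<theta> j" "S j" "K1 j" "K2 j" p f
        unfolding pairc_def pairc_axioms_def using comp[OF i] comp[OF j] p f True by auto
      have e3: "T3 i j = (\<Sum>k'. ennreal (pc.ee (Suc k')) * pc.I3 (Suc k'))"
        unfolding T3_def pc.I3_def pc.ee_def Let_def pc.rk_def wk_def pc.A_def Aijk_def mms.m_def[OF mms] ..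
      have e1: "T1 i j = (\<Sum>k'. ennreal (pc.ee (Suc k')) * pc.I1 (Suc k'))"
        unfolding T1_def pc.I1_def pc.ee_def Let_def pc.rk_def wk_def pc.G_def mms.m_def[OF mms] ..
      have eL: "L i = (\<integral>\<^sup>+y. pc.F y \<partial>Hrestr M (\<theta> i) (S i))" "L j = (\<integral>\<^sup>+y. pc.F y \<partial>Hrestr M (\<theta> j) (S j))"
        unfolding L_def pc.F_def by rule+
      have "T3 i j \<le> ennreal pc.Cpair * (T1 i j + L i + L j)"
        unfolding e3 e1 eL using pc.pair_sum by blast
      also have "\<dots> \<le> ennreal (Cp i j) * (T1 i j + L i + L j)"
        unfolding Cp_def by (intro mult_right_mono ennreal_leI) auto
      finally show ?thesis .
    next
      case False
      have "T3 i j = 0"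
      proof -
        have "(\<integral>\<^sup>+y. (\<integral>\<^sup>+z. (if dist y z \<le> 2 powr - real k then wk M k y z * epowr (Aijk M \<theta> S i j k f y z) p else 0)
                 \<partial>Hrestr M (\<theta> j) (S j)) \<partial>Hrestr M (\<theta> i) (S i)) = 0" (is "?I k = 0") for k
        proof (cases "comp.ND M (\<theta> i)")
          case True
          then have "\<not> comp.ND M (\<theta> j)" using False by blast
          then show ?thesis using comp.nn_integral_nonND[OF comp[OF j]] by simp
        next
          case False
          then show ?thesis using comp.nn_integral_nonND[OF comp[OF i]] by simp
        qed
        then have z0: "?I k = 0" for k .
        show ?thesis unfolding T3_def Let_def by (simp only: z0 mult_zero_right suminf_zero)
      qed
      then show ?thesis by simp
    qed
    define S3 where "S3 = (\<Sum>i\<in>{1..N}. \<Sum>j\<in>{1..N}. if i = j then 0 else T3 i j)"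
    define S1 where "S1 = (\<Sum>i\<in>{1..N}. \<Sum>j\<in>{1..N}. if i = j then 0 else T1 i j)"
    define SL where "SL = (\<Sum>i\<in>{1..N}. L i)"
    have "S3 \<le> (\<Sum>i\<in>{1..N}. \<Sum>j\<in>{1..N}. ennreal C0 * (if i = j then 0 else T1 i j) + ennreal C0 * (L i + L j))"
      unfolding S3_def
    proof (intro sum_mono)
      fix i j assume i: "i \<in> {1..N}" and j: "j \<in> {1..N}"
      show "(if i = j then 0 else T3 i j) \<le> ennreal C0 * (if i = j then 0 else T1 i j) + ennreal C0 * (L i + L j)"
      proof (cases "i = j")
        case False
        have "T3 i j \<le> ennreal (Cp i j) * (T1 i j + L i + L j)" by (rule pb[OF i j])
        also have "\<dots> \<le> ennreal C0 * (T1 i j + L i + L j)"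
          using Cp_le[OF i j] by (intro mult_right_mono ennreal_leI) auto
        finally show ?thesis using False by (simp add: distrib_left add.assoc)
      qed simp
    qed
    also have "\<dots> = ennreal C0 * S1 + ennreal C0 * (\<Sum>i\<in>{1..N}. \<Sum>j\<in>{1..N}. (L i + L j))"
      unfolding S1_def by (simp only: sum.distrib sum_distrib_left[symmetric])
    also have "(\<Sum>i\<in>{1..N}. \<Sum>j\<in>{1..N}. (L i + L j)) = ennreal (2 * real N) * SL"
    proof -
      have "(\<Sum>i\<in>{1..N}. \<Sum>j\<in>{1..N}. (L i + L j)) = (\<Sum>i\<in>{1..N}. of_nat N * L i + SL)"
        unfolding SL_def by (simp add: sum.distrib)
      also have "\<dots> = of_nat N * SL + of_nat N * SL"
        unfolding SL_def by (simp add: sum.distrib sum_distrib_left)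
      also have "\<dots> = (of_nat (2*N) :: ennreal) * SL"
        by (simp only: mult_2 of_nat_add distrib_right)
      also have "(of_nat (2*N) :: ennreal) = ennreal (2 * real N)"
        by (simp add: ennreal_of_nat_eq_real_of_nat)
      finally show ?thesis .
    qed
    also have "ennreal C0 * S1 + ennreal C0 * (ennreal (2 * real N) * SL) \<le> ennreal D * (S1 + SL)"
    proof -
      have "ennreal C0 * (ennreal (2 * real N) * SL) = ennreal (C0 * (2 * real N)) * SL"
        using C0 by (simp add: ennreal_mult mult.assoc)
      moreover have "ennreal C0 * S1 \<le> ennreal D * S1" using D by (intro mult_right_mono ennreal_leI) auto
      moreover have "ennreal (C0 * (2 * real N)) * SL \<le> ennreal D * SL" using D by (intro mult_right_mono ennreal_leI) auto
      ultimately show ?thesis by (simp add: distrib_left add_mono)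
    qed
    finally have S3le: "S3 \<le> ennreal D * (S1 + SL)" .
    have q: "0 < 1/p" "1/p \<le> 1" using p by auto
    have "GL3 p M N \<theta> S f = epowr S3 (1/p)" unfolding GL3 S3_def ..
    also have "\<dots> \<le> epowr (ennreal D * (S1 + SL)) (1/p)" using S3le q by (intro epowr_mono) auto
    also have "\<dots> = ennreal (D powr (1/p)) * epowr (S1 + SL) (1/p)" using D q by (intro epowr_cmult) auto
    also have "\<dots> \<le> ennreal (D powr (1/p)) * (epowr S1 (1/p) + epowr SL (1/p))"
      using q by (intro mult_left_mono epowr_add_le) auto
    also have "\<dots> \<le> ennreal (D powr (1/p)) * (epowr S1 (1/p) + (\<Sum>i\<in>{1..N}. epowr (L i) (1/p)))"
      unfolding SL_def using q by (intro mult_left_mono add_left_mono epowr_sum_le) auto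
    also have "\<dots> = ennreal (D powr (1/p)) * (GL1 p M N \<theta> S f + (\<Sum>i\<in>{1..N}. Lpnorm p (Hrestr M (\<theta> i) (S i)) f))"
      unfolding GL1 S1_def LN ..
    finally show "GL3 p M N \<theta> S f \<le> ennreal (D powr (1/p)) * (GL1 p M N \<theta> S f + (\<Sum>i\<in>{1..N}. Lpnorm p (Hrestr M (\<theta> i) (S i)) f))" .
  qed
qed

end
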